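(* For every $n\ge0$ the maps $L,R:\mathcal{Y}_n\to\mathcal{Q}_n$, $C:\mathcal{Q}_n\to\mathcal{Y}_n$, $\lambda,\rho:\mathfrak{S}_n\to\mathcal{Y}_n$, $\gamma:\mathcal{Y}_n\to\mathfrak{S}_n$, $\mathrm{Des},\mathrm{GDes}:\mathfrak{S}_n\to\mathcal{Q}_n$ and $Z:\mathcal{Q}_n\to\mathfrak{S}_n$ are order-preserving and satisfy $L\circ\lambda=\mathrm{Des}$, $\gamma\circ C=Z$ and $R\circ\rho=\mathrm{GDes}$. Moreover, each pair $(\lambda,\gamma)$, $(L,C)$, $(\mathrm{Des},Z)$, $(\gamma,\rho)$, $(C,R)$, $(Z,\mathrm{GDes})$ is a Galois connection with the first map left adjoint to the second; that is, for all $\sigma\in\mathfrak{S}_n$, $t\in\mathcal{Y}_n$, $\mathsf{S}\in\mathcal{Q}_n$: $\lambda(\sigma)\le t\iff\sigma\le\gamma(t)$; $L(t)\subseteq\mathsf{S}\iff t\le C(\mathsf{S})$; $\mathrm{Des}(\sigma)\subseteq\mathsf{S}\iff\sigma\le Z(\mathsf{S})$; $\gamma(t)\le\sigma\iff t\le\rho(\sigma)$; $C(\mathsf{S})\le t\iff\mathsf{S}\subseteq R(t)$; $Z(\mathsf{S})\le\sigma\iff\mathsf{S}\subseteq\mathrm{GDes}(\sigma)$.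
   Context: $\mathcal{Q}_n$ is the Boolean poset of subsets of $[n-1]$ under inclusion. $\mathfrak{S}_n$ carries the weak order: $\sigma\le\tau$ iff $\mathrm{Inv}(\sigma)\subseteq\mathrm{Inv}(\tau)$, $\mathrm{Inv}(\sigma)=\{(i,j):i<j,\sigma(i)>\sigma(j)\}$. Permutations in one-line notation; $\mathrm{st}(a_1,\dots,a_p)$ is the permutation with the same relative order as distinct integers $a_i$; $\mathrm{id}_n$ identity, $\mathrm{id}_0$ empty. For $\sigma\in\mathfrak{S}_p,\tau\in\mathfrak{S}_q$: $\sigma\vee\tau=(\sigma(1)+q,\dots,\sigma(p)+q,p+q+1,\tau(1),\dots,\tau(q))$, $\sigma\backslash\tau=(\sigma(1)+q,\dots,\sigma(p)+q,\tau(1),\dots,\tau(q))$. $\mathrm{Des}(\sigma)=\{i\in[n-1]:\sigma(i)>\sigma(i+1)\}$; $\mathrm{GDes}(\sigma)=\{p\in[n-1]:\sigma=\alpha\backslash\beta,\ \alpha\in\mathfrak{S}_p\}$ (global descents). For $\mathsf{S}=\{p_1<\dots<p_k\}$, $Z(\mathsf{S})=\mathrm{id}_{p_1}\backslash\mathrm{id}_{p_2-p_1}\backslash\cdots\backslash\mathrm{id}_{n-p_k}$. Trees: $\mathcal{Y}_n$ = rooted planar binary trees with $n$ internal nodes, $\mathcal{Y}_0=\{|\}$; $s\vee t$ = tree whose root has left subtree $s$ and right subtree $t$; $t=t_l\vee t_r$ uniquely for $t\ne|$. Tamari order on $\mathcal{Y}_n$: generated by replacing a subtree $(a\vee b)\vee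 c$ by the larger $a\vee(b\vee c)$. $s\backslash t$: $|\backslash t=t$, $s\backslash t=s_l\vee(s_r\backslash t)$. $1_0=|$, $1_n=1_{n-1}\vee|$. $C(\mathsf{S})=1_{p_1}\backslash1_{p_2-p_1}\backslash\cdots\backslash1_{n-p_k}$. Numbering the leaves of $t$ by $0,\dots,n$ left to right, $L(t)=\{i\in[n-1]:\text{leaf } i\text{ is a left child}\}$. $R(t)=\{j\in[n-1]:t=r\backslash r'\text{ for some } r\in\mathcal{Y}_j\}$. $\lambda$: $\lambda(\mathrm{id}_0)=|$; for $n\ge1$, $j=\sigma^{-1}(n)$, $\lambda(\sigma)=\lambda(\mathrm{st}(\sigma(1),..,\sigma(j-1)))\vee\lambda(\mathrm{st}(\sigma(j+1),..,\sigma(n)))$. $\gamma$: $\gamma(|)=\mathrm{id}_0$, $\gamma(t)=\gamma(t_l)\vee\gamma(t_r)$. $\rho$: $\rho(\mathrm{id}_0)=|$; for $n\ge1$ let $j$ be the smallest element of $\mathrm{GDes}(\sigma)$, or $j=n$ if $\mathrm{GDes}(\sigma)=\emptyset$; then $\rho(\sigma)=\rho(\mathrm{st}(\sigma(1),\dots,\sigma(j-1)))\vee\rho(\mathrm{st}(\sigma(j+1),\dots,\sigma(n)))$. *)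

theory Defs
  imports Main
begin

definition perms :: "nat \<Rightarrow> nat list set" where
  "perms n = {\<sigma>. distinct \<sigma> \<and> set \<sigma> = {1..n}}"

definition idp :: "nat \<Rightarrow> nat list" where
  "idp n = [1..<n+1]"

definition Inv :: "nat list \<Rightarrow> (nat \<times> nat) set" where
  "Inv \<sigma> = {(i,j). 1 \<le> i \<and> i < j \<and> j \<le> length \<sigma> \<and> \<sigma> ! (i-1) > \<sigma> ! (j-1)}"

definition weak_le :: "nat list \<Rightarrow> nat list \<Rightarrow> bool" where
  "weak_le \<sigma> \<tau> \<longleftrightarrow> Inv \<sigma> \<subseteq> Inv \<tau>"

definition st :: "nat list \<Rightarrow> nat list" where
  "st xs = map (\<lambda>a. card {b \<in> set xs. b \<le> a}) xs"

definition pvee :: "nat list \<Rightarrow> nat list \<Rightarrow> nat list" where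
  "pvee \<sigma> \<tau> = map (\<lambda>a. a + length \<tau>) \<sigma> @ [length \<sigma> + length \<tau> + 1] @ \<tau>"

definition pbs :: "nat list \<Rightarrow> nat list \<Rightarrow> nat list" where
  "pbs \<sigma> \<tau> = map (\<lambda>a. a + length \<tau>) \<sigma> @ \<tau>"

definition Des :: "nat list \<Rightarrow> nat set" where
  "Des \<sigma> = {i. 1 \<le> i \<and> i < length \<sigma> \<and> \<sigma> ! (i-1) > \<sigma> ! i}"

definition GDes :: "nat list \<Rightarrow> nat set" where
  "GDes \<sigma> = {p. 1 \<le> p \<and> p < length \<sigma> \<and>
      (\<exists>\<alpha> \<beta>. \<alpha> \<in> perms p \<and> \<beta> \<in> perms (length \<sigma> - p) \<and> \<sigma> = pbs \<alpha> \<beta>)}"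

definition blocks :: "nat \<Rightarrow> nat set \<Rightarrow> nat list" where
  "blocks n S = (let ps = sorted_list_of_set S in
      map (\<lambda>(a,b). a - b) (zip (ps @ [n]) (0 # ps)))"

definition Z :: "nat \<Rightarrow> nat set \<Rightarrow> nat list" where
  "Z n S = foldr pbs (map idp (blocks n S)) []"

datatype tree = Lf | Nd tree tree

fun nodes :: "tree \<Rightarrow> nat" where
  "nodes Lf = 0"
| "nodes (Nd l r) = Suc (nodes l + nodes r)"

definition Y :: "nat \<Rightarrow> tree set" where
  "Y n = {t. nodes t = n}"

inductive tam_step :: "tree \<Rightarrow> tree \<Rightarrow> bool" where
  rot: "tam_step (Nd (Nd a b) c) (Nd a (Nd b c))"
| left: "tam_step s s' \<Longrightarrow> tam_step (Nd s t) (Nd s' t)"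
| right: "tam_step t t' \<Longrightarrow> tam_step (Nd s t) (Nd s t')"

definition tamari_le :: "tree \<Rightarrow> tree \<Rightarrow> bool" where
  "tamari_le = tam_step\<^sup>*\<^sup>*"

fun tbs :: "tree \<Rightarrow> tree \<Rightarrow> tree" where
  "tbs Lf t = t"
| "tbs (Nd l r) t = Nd l (tbs r t)"

fun one :: "nat \<Rightarrow> tree" where
  "one 0 = Lf"
| "one (Suc n) = Nd (one n) Lf"

definition C :: "nat \<Rightarrow> nat set \<Rightarrow> tree" where
  "C n S = foldr tbs (map one (blocks n S)) Lf"

text \<open>For each leaf (left to right), whether it is a left child; the flag says
  whether the current subtree is a left child.\<close>
fun leafdirs :: "bool \<Rightarrow> tree \<Rightarrow> bool list" where
  "leafdirs b Lf = [b]"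
| "leafdirs b (Nd l r) = leafdirs True l @ leafdirs False r"

definition L :: "tree \<Rightarrow> nat set" where
  "L t = {i. 1 \<le> i \<and> i < nodes t \<and> leafdirs False t ! i}"

definition R :: "tree \<Rightarrow> nat set" where
  "R t = {j. 1 \<le> j \<and> j < nodes t \<and> (\<exists>r r'. nodes r = j \<and> t = tbs r r')}"

fun gam :: "tree \<Rightarrow> nat list" where
  "gam Lf = []"
| "gam (Nd l r) = pvee (gam l) (gam r)"

text \<open>Recursion with a fuel argument (the length), which suffices on permutations.\<close>
fun lamf :: "nat \<Rightarrow> nat list \<Rightarrow> tree" where
  "lamf 0 \<sigma> = Lf"
| "lamf (Suc m) \<sigma> = (if \<sigma> = [] then Lf else
     (let j = length (takeWhile (\<lambda>a. a \<noteq> length \<sigma>) \<sigma>) + 1 in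
      Nd (lamf m (st (take (j-1) \<sigma>))) (lamf m (st (drop j \<sigma>)))))"

definition lam :: "nat list \<Rightarrow> tree" where
  "lam \<sigma> = lamf (length \<sigma>) \<sigma>"

fun rhof :: "nat \<Rightarrow> nat list \<Rightarrow> tree" where
  "rhof 0 \<sigma> = Lf"
| "rhof (Suc m) \<sigma> = (if \<sigma> = [] then Lf else
     (let j = (if GDes \<sigma> = {} then length \<sigma> else Min (GDes \<sigma>)) in
      Nd (rhof m (st (take (j-1) \<sigma>))) (rhof m (st (drop j \<sigma>)))))"

definition rho :: "nat list \<Rightarrow> tree" where
  "rho \<sigma> = rhof (length \<sigma>) \<sigma>"

definition Q :: "nat \<Rightarrow> nat set set" where
  "Q n = Pow {1..n-1}"

end

theory Submission
  imports Defs
begin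


lemma perms_iff: "xs \<in> perms n \<longleftrightarrow> distinct xs \<and> set xs = {1..n}"
  by (simp add: perms_def)

lemma perms_length: "xs \<in> perms n \<Longrightarrow> length xs = n"
  by (metis card_atLeastAtMost diff_Suc_1 distinct_card perms_iff)

lemma Inv_mem: "(i,j) \<in> Inv xs \<longleftrightarrow> 1 \<le> i \<and> i < j \<and> j \<le> length xs \<and> xs!(i-1) > xs!(j-1)"
  by (simp add: Inv_def)

lemma Inv_take_mem: "(i,j) \<in> Inv (take k xs) \<longleftrightarrow> (i,j) \<in> Inv xs \<and> j \<le> k"
  by (auto simp: Inv_mem)

lemma Inv_drop_mem: "(i,j) \<in> Inv (drop k xs) \<longleftrightarrow> 1 \<le> i \<and> (i+k,j+k) \<in> Inv xs"
proof (cases "1 \<le> i \<and> i < j")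
  case True
  then have "k + (i - 1) = i + k - 1" "k + (j - 1) = j + k - 1" by auto
  then show ?thesis using True unfolding Inv_mem by (auto simp: nth_drop)
qed (auto simp: Inv_mem)

lemma Inv_map_mono_mem:
  assumes "\<And>a b. a \<in> set xs \<Longrightarrow> b \<in> set xs \<Longrightarrow> f a < f b \<longleftrightarrow> a < b"
  shows "(i,j) \<in> Inv (map f xs) \<longleftrightarrow> (i,j) \<in> Inv xs"
proof (cases "1 \<le> i \<and> i < j \<and> j \<le> length xs")
  case True
  then have "f (xs!(i-1)) < f (xs!(j-1)) \<longleftrightarrow> xs!(i-1) < xs!(j-1)" "f (xs!(j-1)) < f (xs!(i-1)) \<longleftrightarrow> xs!(j-1) < xs!(i-1)"
    using assms by auto
  then show ?thesis using True unfolding Inv_mem by auto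
qed (auto simp: Inv_mem)

lemma st_mono:
  fixes xs :: "nat list"
  assumes "a \<in> set xs" "b \<in> set xs"
  shows "card {c \<in> set xs. c \<le> a} < card {c \<in> set xs. c \<le> b} \<longleftrightarrow> a < b"
proof
  assume "a < b"
  then have "b \<in> {c \<in> set xs. c \<le> b}" "b \<notin> {c \<in> set xs. c \<le> a}" using assms(2) by auto
  have "{c \<in> set xs. c \<le> a} \<subset> {c \<in> set xs. c \<le> b}"
  proof (rule psubsetI)
    show "{c \<in> set xs. c \<le> a} \<subseteq> {c \<in> set xs. c \<le> b}" using \<open>a < b\<close> by auto
    show "{c \<in> set xs. c \<le> a} \<noteq> {c \<in> set xs. c \<le> b}" using \<open>b \<notin> {c \<in> set xs. c \<le> a}\<close> \<open>b \<in> {c \<in> set xs. c \<le> b}\<close> by blast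
  qed
  then show "card {c \<in> set xs. c \<le> a} < card {c \<in> set xs. c \<le> b}"
    by (rule psubset_card_mono[rotated]) simp
next
  assume h: "card {c \<in> set xs. c \<le> a} < card {c \<in> set xs. c \<le> b}"
  show "a < b"
  proof (rule ccontr)
    assume "\<not> a < b"
    then have "{c \<in> set xs. c \<le> b} \<subseteq> {c \<in> set xs. c \<le> a}" by auto
    then have "card {c \<in> set xs. c \<le> b} \<le> card {c \<in> set xs. c \<le> a}"
      by (rule card_mono[rotated]) simp
    with h show False by simp
  qed
qed

lemma Inv_st_mem: "(i,j) \<in> Inv (st xs) \<longleftrightarrow> (i,j) \<in> Inv xs"
  unfolding st_def by (rule Inv_map_mono_mem) (rule st_mono)

lemma Inv_st: "Inv (st xs) = Inv xs"
  using Inv_st_mem by auto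

lemma length_st[simp]: "length (st xs) = length xs"
  by (simp add: st_def)

lemma st_perm:
  assumes "distinct xs"
  shows "st xs \<in> perms (length xs)"
proof -
  let ?f = "\<lambda>a. card {b \<in> set xs. b \<le> a}"
  have inj: "inj_on ?f (set xs)"
  proof (rule inj_onI)
    fix a b assume "a \<in> set xs" "b \<in> set xs" "?f a = ?f b"
    then show "a = b" using st_mono[of a xs b] st_mono[of b xs a] by (metis less_irrefl linorder_neq_iff)
  qed
  have sub: "?f ` set xs \<subseteq> {1..length xs}"
  proof
    fix y assume "y \<in> ?f ` set xs"
    then obtain a where a: "a \<in> set xs" "y = ?f a" by auto
    have "{b \<in> set xs. b \<le> a} \<noteq> {}" using a by blast
    then have "1 \<le> y" using a by (simp add: Suc_le_eq card_gt_0_iff)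
    moreover have "y \<le> card (set xs)" using a by (auto intro!: card_mono)
    ultimately show "y \<in> {1..length xs}" using assms by (simp add: distinct_card)
  qed
  have "card (?f ` set xs) = length xs" using inj assms by (simp add: card_image distinct_card)
  then have "?f ` set xs = {1..length xs}" using sub by (intro card_subset_eq) auto
  then show ?thesis unfolding perms_iff st_def using inj assms by (simp add: distinct_map)
qed

lemma perm_nth_range: "xs \<in> perms n \<Longrightarrow> k < n \<Longrightarrow> 1 \<le> xs!k \<and> xs!k \<le> n"
  by (metis atLeastAtMost_iff nth_mem perms_iff perms_length)

lemma perm_nth_inj: "xs \<in> perms n \<Longrightarrow> k < n \<Longrightarrow> k' < n \<Longrightarrow> xs!k = xs!k' \<Longrightarrow> k = k'"
  by (metis nth_eq_iff_index_eq perms_iff perms_length)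

lemma pbs_nth: "pbs x y ! k = (if k < length x then x!k + length y else y!(k - length x))"
  by (simp add: pbs_def nth_append)

lemma length_pbs[simp]: "length (pbs x y) = length x + length y"
  by (simp add: pbs_def)

lemma pbs_perm:
  assumes "x \<in> perms p" "y \<in> perms q"
  shows "pbs x y \<in> perms (p+q)"
proof -
  have lx: "length x = p" and ly: "length y = q" using assms perms_length by auto
  have "set (map (\<lambda>a. a + q) x) = (\<lambda>a. a + q) ` {1..p}" using assms(1) by (simp add: perms_iff)
  also have "\<dots> = {q+1..q+p}" by (auto simp: image_iff intro!: bexI[where x="_ - q"])
  finally have s1: "set (map (\<lambda>a. a + q) x) = {q+1..q+p}" .
  have s2: "set y = {1..q}" using assms(2) by (simp add: perms_iff)
  have "distinct (map (\<lambda>a. a + q) x)" using assms(1) by (simp add: perms_iff distinct_map)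
  moreover have "distinct y" using assms(2) by (simp add: perms_iff)
  moreover have "set (map (\<lambda>a. a + q) x) \<inter> set y = {}" using s1 s2 by auto
  moreover have "set (map (\<lambda>a. a + q) x) \<union> set y = {1..p+q}" using s1 s2 by auto
  ultimately show ?thesis unfolding pbs_def perms_iff by (simp add: ly)
qed

lemma Inv_pbs_mem:
  assumes "x \<in> perms p" "y \<in> perms q"
  shows "(i,j) \<in> Inv (pbs x y) \<longleftrightarrow> (i,j) \<in> Inv x \<or> (1 \<le> i \<and> i \<le> p \<and> p < j \<and> j \<le> p+q) \<or> (p < i \<and> (i-p, j-p) \<in> Inv y)"
proof -
  have lx: "length x = p" and ly: "length y = q" using assms perms_length by auto
  show ?thesis
  proof (cases "1 \<le> i \<and> i < j \<and> j \<le> p + q")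
    case False
    then show ?thesis using lx ly by (auto simp: Inv_mem)
  next
    case True
    show ?thesis
    proof (cases "j \<le> p")
      case True
      with \<open>1 \<le> i \<and> i < j \<and> j \<le> p + q\<close> show ?thesis using lx ly by (auto simp: Inv_mem pbs_nth)
    next
      case jp: False
      show ?thesis
      proof (cases "i \<le> p")
        case True
        have a: "x!(i-1) \<ge> 1" using perm_nth_range[OF assms(1), of "i-1"] True \<open>1 \<le> i \<and> i < j \<and> j \<le> p + q\<close> by auto
        have b: "y!(j-1-p) \<le> q" using perm_nth_range[OF assms(2), of "j-1-p"] jp \<open>1 \<le> i \<and> i < j \<and> j \<le> p + q\<close> by auto
        have "pbs x y ! (i-1) > pbs x y ! (j-1)" using a b True jp lx ly \<open>1 \<le> i \<and> i < j \<and> j \<le> p + q\<close> by (auto simp: pbs_nth)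
        then show ?thesis using True jp lx ly \<open>1 \<le> i \<and> i < j \<and> j \<le> p + q\<close> by (auto simp: Inv_mem)
      next
        case False
        then have e1: "i - 1 - p = i - p - 1" "j - 1 - p = j - p - 1" by auto
        show ?thesis using False jp lx ly \<open>1 \<le> i \<and> i < j \<and> j \<le> p + q\<close> by (auto simp: Inv_mem pbs_nth e1)
      qed
    qed
  qed
qed

lemma pvee_pbs: "pvee x y = pbs (x @ [length x + 1]) y"
  by (simp add: pvee_def pbs_def)

lemma snoc_perm: "x \<in> perms p \<Longrightarrow> x @ [p+1] \<in> perms (p+1)"
  by (auto simp: perms_iff)

lemma Inv_snoc_mem:
  assumes "x \<in> perms p"
  shows "(i,j) \<in> Inv (x @ [p+1]) \<longleftrightarrow> (i,j) \<in> Inv x"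
proof -
  have lx: "length x = p" using assms perms_length by auto
  show ?thesis
  proof (cases "j = p + 1")
    case True
    then show ?thesis using lx perm_nth_range[OF assms, of "i-1"] by (auto simp: Inv_mem nth_append)
  next
    case False
    then show ?thesis using lx by (auto simp: Inv_mem nth_append)
  qed
qed

lemma pvee_perm:
  assumes "x \<in> perms p" "y \<in> perms q"
  shows "pvee x y \<in> perms (p+q+1)"
  using pbs_perm[OF snoc_perm[OF assms(1)] assms(2)] assms(1) perms_length
  by (simp add: pvee_pbs)

lemma Inv_pvee_mem:
  assumes "x \<in> perms p" "y \<in> perms q"
  shows "(i,j) \<in> Inv (pvee x y) \<longleftrightarrow> (i,j) \<in> Inv x \<or> (1 \<le> i \<and> i \<le> p+1 \<and> p+1 < j \<and> j \<le> p+q+1) \<or> (p+1 < i \<and> (i-(p+1), j-(p+1)) \<in> Inv y)"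
  using Inv_pbs_mem[OF snoc_perm[OF assms(1)] assms(2), of i j] Inv_snoc_mem[OF assms(1)] perms_length[OF assms(1)]
  by (simp add: pvee_pbs)


fun Itr :: "tree \<Rightarrow> (nat \<times> nat) set" where
  "Itr Lf = {}"
| "Itr (Nd l r) = {(i,j). (i,j) \<in> Itr l \<or> (1 \<le> i \<and> i \<le> nodes l + 1 \<and> nodes l + 1 < j \<and> j \<le> nodes l + nodes r + 1)
      \<or> (nodes l + 1 < i \<and> (i - (nodes l + 1), j - (nodes l + 1)) \<in> Itr r)}"

lemma Itr_Nd_mem: "(i,j) \<in> Itr (Nd l r) \<longleftrightarrow> (i,j) \<in> Itr l \<or> (1 \<le> i \<and> i \<le> nodes l + 1 \<and> nodes l + 1 < j \<and> j \<le> nodes l + nodes r + 1)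
      \<or> (nodes l + 1 < i \<and> (i - (nodes l + 1), j - (nodes l + 1)) \<in> Itr r)"
  by simp

declare Itr.simps(2)[simp del]

lemma Itr_bound: "(i,j) \<in> Itr t \<Longrightarrow> 1 \<le> i \<and> i < j \<and> j \<le> nodes t"
proof (induction t arbitrary: i j)
  case Lf then show ?case by simp
next
  case (Nd l r)
  from Nd.prems show ?case unfolding Itr_Nd_mem
  proof (elim disjE)
    assume "(i,j) \<in> Itr l" then show ?thesis using Nd.IH(1) by fastforce
  next
    assume "nodes l + 1 < i \<and> (i - (nodes l + 1), j - (nodes l + 1)) \<in> Itr r"
    then show ?thesis using Nd.IH(2)[of "i - (nodes l + 1)" "j - (nodes l + 1)"] by auto
  qed auto
qed

lemma gam_perm: "gam t \<in> perms (nodes t)"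
proof (induction t)
  case Lf then show ?case by (simp add: perms_iff)
next
  case (Nd l r) then show ?case using pvee_perm[OF Nd.IH] by simp
qed

lemma length_gam: "length (gam t) = nodes t"
  using gam_perm perms_length by blast

lemma Inv_gam_mem: "(i,j) \<in> Inv (gam t) \<longleftrightarrow> (i,j) \<in> Itr t"
proof (induction t arbitrary: i j)
  case Lf then show ?case by (simp add: Inv_mem)
next
  case (Nd l r)
  show ?case using Inv_pvee_mem[OF gam_perm gam_perm, of i j l r] Nd.IH by (simp add: Itr_Nd_mem)
qed

lemma Inv_gam: "Inv (gam t) = Itr t"
  using Inv_gam_mem by auto

lemma Itr_leftclosed: "(b,c) \<in> Itr t \<Longrightarrow> 1 \<le> a \<Longrightarrow> a \<le> b \<Longrightarrow> (a,c) \<in> Itr t"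
proof (induction t arbitrary: a b c)
  case Lf then show ?case by simp
next
  case (Nd l r)
  let ?p = "nodes l + 1"
  consider (A) "(b,c) \<in> Itr l" | (B) "1 \<le> b \<and> b \<le> ?p \<and> ?p < c \<and> c \<le> nodes l + nodes r + 1"
    | (C) "?p < b \<and> (b - ?p, c - ?p) \<in> Itr r"
    using Nd.prems(1) unfolding Itr_Nd_mem by blast
  then show ?case
  proof cases
    case A then show ?thesis using Nd.IH(1) Nd.prems Itr_Nd_mem by blast
  next
    case B then show ?thesis using Nd.prems(2,3) unfolding Itr_Nd_mem by linarith
  next
    case C
    show ?thesis
    proof (cases "?p < a")
      case True
      have "1 \<le> a - ?p" "a - ?p \<le> b - ?p" using True Nd.prems by auto
      then have "(a - ?p, c - ?p) \<in> Itr r" using Nd.IH(2) C by blast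
      then show ?thesis using True unfolding Itr_Nd_mem by blast
    next
      case False
      have "c - ?p \<le> nodes r" "b - ?p < c - ?p" using Itr_bound[of "b - ?p" "c - ?p" r] C by auto
      then have "1 \<le> a \<and> a \<le> ?p \<and> ?p < c \<and> c \<le> nodes l + nodes r + 1" using False C Nd.prems by linarith
      then show ?thesis unfolding Itr_Nd_mem by blast
    qed
  qed
qed

lemma Itr_cotrans: "(x,z) \<in> Itr t \<Longrightarrow> x < y \<Longrightarrow> y < z \<Longrightarrow> (x,y) \<in> Itr t \<or> (y,z) \<in> Itr t"
  unfolding Inv_gam_mem[symmetric] Inv_mem by auto

lemma Itr_trans: "(x,y) \<in> Itr t \<Longrightarrow> (y,z) \<in> Itr t \<Longrightarrow> (x,z) \<in> Itr t"
  unfolding Inv_gam_mem[symmetric] Inv_mem by auto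

lemma tam_step_nodes: "tam_step s t \<Longrightarrow> nodes s = nodes t"
  by (induction rule: tam_step.induct) auto

lemma tamari_nodes: "tamari_le s t \<Longrightarrow> nodes s = nodes t"
  unfolding tamari_le_def by (induction rule: rtranclp_induct) (auto dest: tam_step_nodes)

lemma tamari_refl: "tamari_le s s"
  by (simp add: tamari_le_def)

lemma tamari_trans: "tamari_le s t \<Longrightarrow> tamari_le t u \<Longrightarrow> tamari_le s u"
  unfolding tamari_le_def by simp

lemma tamari_step: "tam_step s t \<Longrightarrow> tamari_le s t"
  unfolding tamari_le_def by simp

lemma tamari_left: "tamari_le s s' \<Longrightarrow> tamari_le (Nd s t) (Nd s' t)"
  unfolding tamari_le_def
  by (induction rule: rtranclp_induct) (auto intro: rtranclp.rtrancl_into_rtrancl tam_step.left)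

lemma tamari_right: "tamari_le t t' \<Longrightarrow> tamari_le (Nd s t) (Nd s t')"
  unfolding tamari_le_def
  by (induction rule: rtranclp_induct) (auto intro: rtranclp.rtrancl_into_rtrancl tam_step.right)

lemma tamari_Nd: "tamari_le s s' \<Longrightarrow> tamari_le t t' \<Longrightarrow> tamari_le (Nd s t) (Nd s' t')"
  by (meson tamari_left tamari_right tamari_trans)

lemma rot_Itr:
  assumes "(i,j) \<in> Itr (Nd (Nd a b) c)"
  shows "(i,j) \<in> Itr (Nd a (Nd b c))"
proof -
  let ?A = "nodes a" and ?B = "nodes b" and ?C = "nodes c"
  have n1: "nodes (Nd a b) = ?A + ?B + 1" by simp
  have n2: "nodes (Nd b c) = ?B + ?C + 1" by simp
  have e3: "?A + ?B + 1 + 1 = ?A + ?B + 2" "?A + ?B + 1 + ?C + 1 = ?A + ?B + ?C + 2" by simp_all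
  have R: "(i,j) \<in> Itr (Nd a (Nd b c)) \<longleftrightarrow> (i,j) \<in> Itr a \<or> (1 \<le> i \<and> i \<le> ?A + 1 \<and> ?A + 1 < j \<and> j \<le> ?A + (?B + ?C + 1) + 1)
     \<or> (?A + 1 < i \<and> ((i - (?A+1), j - (?A+1)) \<in> Itr b \<or> (1 \<le> i - (?A+1) \<and> i - (?A+1) \<le> ?B + 1 \<and> ?B + 1 < j - (?A+1) \<and> j - (?A+1) \<le> ?B + ?C + 1)
         \<or> (?B + 1 < i - (?A+1) \<and> (i - (?A+1) - (?B+1), j - (?A+1) - (?B+1)) \<in> Itr c)))"
    unfolding Itr_Nd_mem[of i j a] Itr_Nd_mem[of "i - (?A+1)" "j - (?A+1)" b c] n2 by (rule refl)
  consider (L1) "(i,j) \<in> Itr a" | (L2) "1 \<le> i \<and> i \<le> ?A + 1 \<and> ?A + 1 < j \<and> j \<le> ?A + ?B + 1"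
    | (L3) "?A + 1 < i \<and> (i - (?A + 1), j - (?A + 1)) \<in> Itr b"
    | (L4) "1 \<le> i \<and> i \<le> ?A + ?B + 2 \<and> ?A + ?B + 2 < j \<and> j \<le> ?A + ?B + ?C + 2"
    | (L5) "?A + ?B + 2 < i \<and> (i - (?A + ?B + 2), j - (?A + ?B + 2)) \<in> Itr c"
    using assms unfolding Itr_Nd_mem[of i j "Nd a b" c] Itr_Nd_mem[of i j a b] n1 e3 by blast
  then show ?thesis
  proof cases
    case L1 then show ?thesis unfolding R by blast
  next
    case L2 then have "1 \<le> i \<and> i \<le> ?A + 1 \<and> ?A + 1 < j \<and> j \<le> ?A + (?B + ?C + 1) + 1" by linarith
    then show ?thesis unfolding R by blast
  next
    case L3 then show ?thesis unfolding R by blast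
  next
    case L4
    show ?thesis
    proof (cases "i \<le> ?A + 1")
      case True
      then have "1 \<le> i \<and> i \<le> ?A + 1 \<and> ?A + 1 < j \<and> j \<le> ?A + (?B + ?C + 1) + 1" using L4 by linarith
      then show ?thesis unfolding R by blast
    next
      case False
      then have "1 \<le> i - (?A+1) \<and> i - (?A+1) \<le> ?B + 1 \<and> ?B + 1 < j - (?A+1) \<and> j - (?A+1) \<le> ?B + ?C + 1" using L4 by linarith
      moreover have "?A + 1 < i" using False by linarith
      ultimately show ?thesis unfolding R by blast
    qed
  next
    case L5
    have e: "i - (?A+1) - (?B+1) = i - (?A + ?B + 2)" "j - (?A+1) - (?B+1) = j - (?A + ?B + 2)" by auto
    have "?B + 1 < i - (?A+1)" "?A + 1 < i" using L5 by linarith+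
    then show ?thesis using L5 unfolding R e by blast
  qed
qed

lemma tam_step_Itr: "tam_step s t \<Longrightarrow> (i,j) \<in> Itr s \<Longrightarrow> (i,j) \<in> Itr t"
proof (induction arbitrary: i j rule: tam_step.induct)
  case (rot a b c)
  then show ?case by (rule rot_Itr)
next
  case (left s s' t)
  have e: "nodes s' = nodes s" using tam_step_nodes[OF left.hyps] by simp
  show ?case using left.prems left.IH unfolding Itr_Nd_mem e by blast
next
  case (right t t' s)
  have e: "nodes t' = nodes t" using tam_step_nodes[OF right.hyps] by simp
  show ?case using right.prems right.IH unfolding Itr_Nd_mem e by blast
qed

lemma tamari_Itr: "tamari_le s t \<Longrightarrow> Itr s \<subseteq> Itr t"
  unfolding tamari_le_def
  by (induction rule: rtranclp_induct) (auto dest: tam_step_Itr)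


fun rp :: "nat \<Rightarrow> tree \<Rightarrow> tree" where
  "rp k Lf = Lf"
| "rp k (Nd l r) = (if k \<le> nodes l then rp k l else Nd l (rp (k - nodes l - 1) r))"

fun rs :: "nat \<Rightarrow> tree \<Rightarrow> tree" where
  "rs k Lf = Lf"
| "rs k (Nd l r) = (if nodes l < k then rs (k - nodes l - 1) r else Nd (rs k l) r)"

lemma nodes_rp: "nodes (rp k t) = min k (nodes t)"
  by (induction t arbitrary: k) auto

lemma nodes_rs: "nodes (rs k t) = nodes t - k"
  by (induction t arbitrary: k) auto

lemma Itr_rp: "(i,j) \<in> Itr (rp k t) \<longleftrightarrow> (i,j) \<in> Itr t \<and> j \<le> k"
proof (induction t arbitrary: k i j)
  case Lf then show ?case by simp
next
  case (Nd l r)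
  show ?case
  proof (cases "k \<le> nodes l")
    case True
    have "(i,j) \<in> Itr (Nd l r) \<and> j \<le> k \<longleftrightarrow> (i,j) \<in> Itr l \<and> j \<le> k"
      unfolding Itr_Nd_mem using True Itr_bound[of i j l] Itr_bound[of "i - (nodes l+1)" "j - (nodes l+1)" r] by auto
    then show ?thesis using True Nd.IH(1) by simp
  next
    case False
    let ?k = "k - nodes l - 1"
    have n: "nodes (rp ?k r) = min ?k (nodes r)" by (rule nodes_rp)
    have "(i,j) \<in> Itr (rp k (Nd l r)) \<longleftrightarrow> (i,j) \<in> Itr (Nd l (rp ?k r))" using False by simp
    also have "\<dots> \<longleftrightarrow> (i,j) \<in> Itr l \<or> (1 \<le> i \<and> i \<le> nodes l + 1 \<and> nodes l + 1 < j \<and> j \<le> nodes l + min ?k (nodes r) + 1)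
      \<or> (nodes l + 1 < i \<and> (i - (nodes l + 1), j - (nodes l + 1)) \<in> Itr r \<and> j - (nodes l + 1) \<le> ?k)"
      unfolding Itr_Nd_mem n Nd.IH(2) by (rule refl)
    also have "\<dots> \<longleftrightarrow> (i,j) \<in> Itr (Nd l r) \<and> j \<le> k"
      unfolding Itr_Nd_mem using False Itr_bound[of i j l] by auto
    finally show ?thesis .
  qed
qed

lemma Itr_rs: "(i,j) \<in> Itr (rs k t) \<longleftrightarrow> 1 \<le> i \<and> (i+k, j+k) \<in> Itr t"
proof (induction t arbitrary: k i j)
  case Lf then show ?case by simp
next
  case (Nd l r)
  show ?case
  proof (cases "nodes l < k")
    case True
    let ?k = "k - nodes l - 1"
    have e: "i + k - (nodes l + 1) = i + ?k" "j + k - (nodes l + 1) = j + ?k" using True by auto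
    have "1 \<le> i \<and> (i+k, j+k) \<in> Itr (Nd l r) \<longleftrightarrow> 1 \<le> i \<and> (i + ?k, j + ?k) \<in> Itr r"
      unfolding Itr_Nd_mem e using True Itr_bound[of "i+k" "j+k" l] by auto
    then show ?thesis using True Nd.IH(2) by simp
  next
    case False
    let ?q = "nodes l - k"
    have n: "nodes (rs k l) = ?q" by (rule nodes_rs)
    have e: "i - (?q + 1) = i + k - (nodes l + 1)" "j - (?q + 1) = j + k - (nodes l + 1)" using False by auto
    have "(i,j) \<in> Itr (rs k (Nd l r)) \<longleftrightarrow> (i,j) \<in> Itr (Nd (rs k l) r)" using False by simp
    also have "\<dots> \<longleftrightarrow> (1 \<le> i \<and> (i+k, j+k) \<in> Itr l) \<or> (1 \<le> i \<and> i \<le> ?q + 1 \<and> ?q + 1 < j \<and> j \<le> ?q + nodes r + 1)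
      \<or> (?q + 1 < i \<and> (i + k - (nodes l + 1), j + k - (nodes l + 1)) \<in> Itr r)"
      unfolding Itr_Nd_mem n Nd.IH(1) e by (rule refl)
    also have "\<dots> \<longleftrightarrow> 1 \<le> i \<and> (i+k, j+k) \<in> Itr (Nd l r)"
      unfolding Itr_Nd_mem using False by auto
    finally show ?thesis .
  qed
qed

lemma Itr_Nd_sub1: "(i,j) \<in> Itr l \<Longrightarrow> (i,j) \<in> Itr (Nd l r)"
  unfolding Itr_Nd_mem by blast

lemma Itr_Nd_sub3: "(i,j) \<in> Itr r \<Longrightarrow> (i + (nodes l + 1), j + (nodes l + 1)) \<in> Itr (Nd l r)"
  unfolding Itr_Nd_mem using Itr_bound[of i j r] by simp

lemma Itr_Nd_intro3: "nodes l + 1 < i \<Longrightarrow> (i - (nodes l + 1), j - (nodes l + 1)) \<in> Itr r \<Longrightarrow> (i,j) \<in> Itr (Nd l r)"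
  unfolding Itr_Nd_mem by blast

lemma Itr_Nd_cross: "1 \<le> i \<Longrightarrow> i \<le> nodes l + 1 \<Longrightarrow> nodes l + 1 < j \<Longrightarrow> j \<le> nodes (Nd l r) \<Longrightarrow> (i,j) \<in> Itr (Nd l r)"
  unfolding Itr_Nd_mem by simp

lemma Itr_Nd_inv1: "(i,j) \<in> Itr (Nd l r) \<Longrightarrow> j \<le> nodes l \<Longrightarrow> (i,j) \<in> Itr l"
  unfolding Itr_Nd_mem using Itr_bound[of "i - (nodes l + 1)" "j - (nodes l + 1)" r] by auto

lemma Itr_Nd_root: "(i, nodes l + 1) \<notin> Itr (Nd l r)"
  unfolding Itr_Nd_mem using Itr_bound[of i "nodes l + 1" l] Itr_bound[of "i - (nodes l + 1)" 0 r] by auto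

lemma Itr_Nd_inv3: "(i + (nodes l + 1), j + (nodes l + 1)) \<in> Itr (Nd l r) \<Longrightarrow> 1 \<le> i \<Longrightarrow> (i,j) \<in> Itr r"
  unfolding Itr_Nd_mem using Itr_bound[of "i + (nodes l + 1)" "j + (nodes l + 1)" l] by auto

lemma TC_aux:
  "\<forall>s t. nodes s = n \<longrightarrow> nodes t = n \<longrightarrow> Itr s \<subseteq> Itr t \<longrightarrow> tamari_le s t"
proof (induction n rule: less_induct)
  case (less n)
  have EQ: "tamari_le (Nd s1 s2) (Nd t1 t2)"
    if h: "nodes (Nd s1 s2) = n" "nodes (Nd t1 t2) = n" "nodes s1 = nodes t1" "Itr (Nd s1 s2) \<subseteq> Itr (Nd t1 t2)"
    for s1 s2 t1 t2
  proof -
    have "Itr s1 \<subseteq> Itr t1"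
    proof
      fix x assume "x \<in> Itr s1"
      then obtain i j where x: "x = (i,j)" "(i,j) \<in> Itr s1" by (cases x) auto
      have "(i,j) \<in> Itr (Nd s1 s2)" using x(2) by (rule Itr_Nd_sub1)
      then have "(i,j) \<in> Itr (Nd t1 t2)" by (rule subsetD[OF h(4)])
      moreover have "j \<le> nodes t1" using Itr_bound[OF x(2)] h(3) by simp
      ultimately have "(i,j) \<in> Itr t1" by (rule Itr_Nd_inv1)
      then show "x \<in> Itr t1" unfolding x(1) .
    qed
    moreover have "Itr s2 \<subseteq> Itr t2"
    proof
      fix x assume "x \<in> Itr s2"
      then obtain i j where x: "x = (i,j)" "(i,j) \<in> Itr s2" by (cases x) auto
      have "(i + (nodes s1 + 1), j + (nodes s1 + 1)) \<in> Itr (Nd s1 s2)" using x(2) by (rule Itr_Nd_sub3)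
      then have "(i + (nodes t1 + 1), j + (nodes t1 + 1)) \<in> Itr (Nd t1 t2)" using h(3) subsetD[OF h(4)] by simp
      then have "(i,j) \<in> Itr t2" using Itr_Nd_inv3[of i t1 j t2] Itr_bound[OF x(2)] by simp
      then show "x \<in> Itr t2" unfolding x(1) .
    qed
    moreover have "nodes s1 < n" "nodes s2 < n" "nodes s2 = nodes t2" using h by auto
    ultimately have "tamari_le s1 t1" "tamari_le s2 t2" using less.IH h(3) by simp_all
    then show ?thesis by (rule tamari_Nd)
  qed
  show ?case
  proof (intro allI impI)
    fix s t assume hs: "nodes s = n" and ht: "nodes t = n" and sub: "Itr s \<subseteq> Itr t"
    show "tamari_le s t"
    proof (cases s)
      case Lf
      have "t = Lf" using hs ht Lf by (cases t) simp_all
      then show ?thesis using Lf tamari_refl by simp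
    next
      case (Nd s1 s2)
      have "t \<noteq> Lf" using hs ht Nd by auto
      then obtain t1 t2 where t: "t = Nd t1 t2" by (cases t) auto
      let ?p = "nodes s1" and ?m = "nodes t1"
      have sub': "Itr (Nd s1 s2) \<subseteq> Itr (Nd t1 t2)" using sub Nd t by simp
      have "\<not> ?p < ?m"
      proof
        assume pm: "?p < ?m"
        have "?m + 1 \<le> nodes (Nd s1 s2)" using hs ht t Nd by simp
        then have "(?p + 1, ?m + 1) \<in> Itr (Nd s1 s2)" using pm by (intro Itr_Nd_cross) auto
        then have "(?p + 1, ?m + 1) \<in> Itr (Nd t1 t2)" by (rule subsetD[OF sub'])
        then show False using Itr_Nd_root[of "?p+1" t1 t2] by simp
      qed
      moreover
      have "tamari_le (Nd s1 s2) (Nd t1 t2)" if pm: "?m < ?p"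
      proof -
        let ?w = "rp (?p - ?m - 1) t2"
        let ?t = "Nd t1 t2"
        have rpt: "rp ?p ?t = Nd t1 ?w" using pm by simp
        have np: "nodes (rp ?p ?t) = ?p" using nodes_rp[of ?p ?t] ht hs Nd t by simp
        have "Itr s1 \<subseteq> Itr (rp ?p ?t)"
        proof
          fix x assume "x \<in> Itr s1"
          then obtain i j where x: "x = (i,j)" "(i,j) \<in> Itr s1" by (cases x) auto
          have "(i,j) \<in> Itr (Nd s1 s2)" using x(2) by (rule Itr_Nd_sub1)
          then have "(i,j) \<in> Itr ?t" by (rule subsetD[OF sub'])
          then show "x \<in> Itr (rp ?p ?t)" unfolding x(1) Itr_rp using Itr_bound[OF x(2)] by simp
        qed
        moreover have "?p < n" using hs Nd by simp
        ultimately have "tamari_le s1 (rp ?p ?t)" using less.IH np by simp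
        then have st1: "tamari_le (Nd s1 s2) (Nd (Nd t1 ?w) s2)" unfolding rpt by (rule tamari_left)
        have st2: "tamari_le (Nd (Nd t1 ?w) s2) (Nd t1 (Nd ?w s2))"
          by (rule tamari_step) (rule tam_step.rot)
        have nw: "nodes ?w = ?p - ?m - 1" using np rpt by simp
        have nu: "nodes (Nd t1 (Nd ?w s2)) = n" using nw hs Nd pm by simp
        have nt: "nodes ?t = n" using ht t by simp
        have "Itr (Nd t1 (Nd ?w s2)) \<subseteq> Itr ?t"
        proof
          fix x assume "x \<in> Itr (Nd t1 (Nd ?w s2))"
          then obtain i j where x: "x = (i,j)" "(i,j) \<in> Itr (Nd t1 (Nd ?w s2))" by (cases x) auto
          have nn: "nodes t1 + nodes (Nd ?w s2) + 1 = n" using nu by simp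
          consider (a) "(i,j) \<in> Itr t1" | (b) "1 \<le> i \<and> i \<le> ?m + 1 \<and> ?m + 1 < j \<and> j \<le> n"
            | (c) "?m + 1 < i \<and> (i - (?m + 1), j - (?m + 1)) \<in> Itr (Nd ?w s2)"
            using x(2) unfolding Itr_Nd_mem[of i j t1] nn by blast
          then show "x \<in> Itr ?t"
          proof cases
            case a then show ?thesis unfolding x(1) by (rule Itr_Nd_sub1)
          next
            case b then show ?thesis unfolding x(1) using nt by (intro Itr_Nd_cross) auto
          next
            case c
            let ?i = "i - (?m + 1)" and ?j = "j - (?m + 1)"
            consider (c1) "(?i, ?j) \<in> Itr ?w" | (c2) "1 \<le> ?i \<and> ?i \<le> nodes ?w + 1 \<and> nodes ?w + 1 < ?j \<and> ?j \<le> nodes ?w + nodes s2 + 1"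
              | (c3) "nodes ?w + 1 < ?i \<and> (?i - (nodes ?w + 1), ?j - (nodes ?w + 1)) \<in> Itr s2"
              using c unfolding Itr_Nd_mem[of ?i ?j ?w s2] by blast
            then show ?thesis
            proof cases
              case c1
              then have "(?i, ?j) \<in> Itr t2" unfolding Itr_rp by simp
              then show ?thesis unfolding x(1) using c by (intro Itr_Nd_intro3) auto
            next
              case c2
              then have "1 \<le> i \<and> i \<le> ?p + 1 \<and> ?p + 1 < j \<and> j \<le> nodes (Nd s1 s2)" using nw c pm hs Nd by auto
              then have "(i,j) \<in> Itr (Nd s1 s2)" by (intro Itr_Nd_cross) auto
              then show ?thesis unfolding x(1) by (rule subsetD[OF sub'])
            next
              case c3
              have e: "?i - (nodes ?w + 1) = i - (?p + 1)" "?j - (nodes ?w + 1) = j - (?p + 1)" using nw pm c by auto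
              have "?p + 1 < i" using c3 nw pm by auto
              moreover have "(i - (?p + 1), j - (?p + 1)) \<in> Itr s2" using c3 e by simp
              ultimately have "(i,j) \<in> Itr (Nd s1 s2)" by (rule Itr_Nd_intro3)
              then show ?thesis unfolding x(1) by (rule subsetD[OF sub'])
            qed
          qed
        qed
        then have "tamari_le (Nd t1 (Nd ?w s2)) ?t"
          using nu nt by (intro EQ) simp_all
        then show ?thesis using st1 st2 tamari_trans by blast
      qed
      moreover
      have "tamari_le (Nd s1 s2) (Nd t1 t2)" if "?m = ?p"
      proof -
        have n1: "nodes (Nd s1 s2) = n" using hs Nd by simp
        have n2: "nodes (Nd t1 t2) = n" using ht t by simp
        have n3: "nodes s1 = nodes t1" using that by simp
        show ?thesis by (rule EQ[OF n1 n2 n3 sub'])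
      qed
      ultimately have "tamari_le (Nd s1 s2) (Nd t1 t2)"
        by (cases "?m < ?p") (simp_all add: not_less_iff_gr_or_eq)
      then show ?thesis unfolding Nd t .
    qed
  qed
qed

lemma TC:
  assumes "nodes s = nodes t" "Itr s \<subseteq> Itr t"
  shows "tamari_le s t"
proof -
  from TC_aux[of "nodes s"] have "nodes s = nodes s \<longrightarrow> nodes t = nodes s \<longrightarrow> Itr s \<subseteq> Itr t \<longrightarrow> tamari_le s t"
    by (elim allE)
  moreover have "nodes t = nodes s" using assms(1) by simp
  ultimately show ?thesis using assms(2) by blast
qed

lemma tamari_iff: "nodes s = nodes t \<Longrightarrow> tamari_le s t \<longleftrightarrow> Itr s \<subseteq> Itr t"
  using TC[of s t] tamari_Itr[of s t] by auto


definition lc :: "(nat \<times> nat) set \<Rightarrow> (nat \<times> nat) set" where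
  "lc X = {(i,j). 1 \<le> i \<and> (\<exists>k. i \<le> k \<and> (k,j) \<in> X)}"

lemma lc_mem: "(i,j) \<in> lc X \<longleftrightarrow> 1 \<le> i \<and> (\<exists>k. i \<le> k \<and> (k,j) \<in> X)"
  by (simp add: lc_def)

lemma perm_split_max:
  assumes "\<sigma> \<in> perms n" "1 \<le> n"
  obtains A B where "\<sigma> = A @ n # B" "n \<notin> set A"
proof -
  have "n \<in> set \<sigma>" using assms by (simp add: perms_iff)
  then show ?thesis using that split_list_first by metis
qed

lemma lamf_Suc_split:
  assumes "length A + length B + 1 = k" "k \<notin> set A"
  shows "lamf (Suc m) (A @ k # B) = Nd (lamf m (st A)) (lamf m (st B))"
proof -
  have "takeWhile (\<lambda>a. a \<noteq> k) (A @ k # B) = A" using assms(2) by (induction A) auto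
  moreover have "length (A @ k # B) = k" using assms(1) by simp
  ultimately show ?thesis unfolding lamf.simps Let_def by simp
qed

lemma lamf_fuel:
  "xs \<in> perms (length xs) \<Longrightarrow> length xs \<le> m \<Longrightarrow> length xs \<le> m' \<Longrightarrow> lamf m xs = lamf m' xs"
proof (induction m arbitrary: m' xs)
  case 0
  then have "xs = []" by simp
  then show ?case by (cases m') simp_all
next
  case (Suc m)
  show ?case
  proof (cases "xs = []")
    case True then show ?thesis by (cases m') simp_all
  next
    case False
    obtain k where kdef: "length xs = k" by blast
    have k1: "1 \<le> k" using False kdef by (cases xs) auto
    have pk: "xs \<in> perms k" using Suc.prems(1) kdef by simp
    obtain A B where AB: "xs = A @ k # B" "k \<notin> set A" using perm_split_max[OF pk k1] by blast
    obtain m'' where m': "m' = Suc m''" using Suc.prems(3) k1 kdef by (cases m') auto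
    have d: "distinct (A @ k # B)" using pk AB(1) by (simp add: perms_iff)
    then have dA: "distinct A" and dB: "distinct B" by auto
    have L: "length A + length B + 1 = k" using kdef AB(1) by auto
    have "lamf m (st A) = lamf m'' (st A)"
      using Suc.IH[of "st A" m''] st_perm[OF dA] L Suc.prems(2,3) m' kdef by simp
    moreover have "lamf m (st B) = lamf m'' (st B)"
      using Suc.IH[of "st B" m''] st_perm[OF dB] L Suc.prems(2,3) m' kdef by simp
    ultimately show ?thesis unfolding m' AB(1) using lamf_Suc_split[of A B k, OF L AB(2)] by simp
  qed
qed

lemma lam_split:
  assumes "A @ n # B \<in> perms n" "n \<notin> set A"
  shows "lam (A @ n # B) = Nd (lam (st A)) (lam (st B))"
proof -
  have ln: "length A + length B + 1 = n" using perms_length[OF assms(1)] by simp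
  obtain m where m: "n = Suc m" using ln by (cases n) auto
  have d: "distinct (A @ n # B)" using assms(1) by (simp add: perms_iff)
  then have dA: "distinct A" and dB: "distinct B" by auto
  have lA: "length A \<le> m" "length B \<le> m" using ln m by auto
  have "lam (A @ n # B) = lamf (Suc m) (A @ n # B)" unfolding lam_def using ln m by simp
  also have "\<dots> = Nd (lamf m (st A)) (lamf m (st B))" by (rule lamf_Suc_split[OF ln assms(2)])
  also have "lamf m (st A) = lam (st A)"
    unfolding lam_def using lamf_fuel[of "st A" m "length A"] st_perm[OF dA] lA by simp
  also have "lamf m (st B) = lam (st B)"
    unfolding lam_def using lamf_fuel[of "st B" m "length B"] st_perm[OF dB] lA by simp
  finally show ?thesis .
qed

lemma lc_split:
  assumes "\<sigma> \<in> perms n" "\<sigma> ! k = n" "k < n"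
  shows "(i,j) \<in> lc (Inv \<sigma>) \<longleftrightarrow> (i,j) \<in> lc (Inv (take k \<sigma>)) \<or> (1 \<le> i \<and> i \<le> k+1 \<and> k+1 < j \<and> j \<le> n)
      \<or> (k+1 < i \<and> (i-(k+1), j-(k+1)) \<in> lc (Inv (drop (k+1) \<sigma>)))"
proof -
  have ln: "length \<sigma> = n" using assms(1) perms_length by blast
  have nomax: "(x, k+1) \<notin> Inv \<sigma>" for x
  proof
    assume "(x,k+1) \<in> Inv \<sigma>"
    then have h: "1 \<le> x" "x < k+1" "\<sigma>!(x-1) > \<sigma>!k" by (auto simp: Inv_mem)
    moreover have "\<sigma>!(x-1) \<le> n" using perm_nth_range[OF assms(1), of "x-1"] h(2) assms(3) by simp
    ultimately show False using assms(2) by simp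
  qed
  have maxinv: "(k+1, y) \<in> Inv \<sigma>" if "k+1 < y" "y \<le> n" for y
  proof -
    have "\<sigma>!(y-1) \<le> n" using perm_nth_range[OF assms(1), of "y-1"] that by simp
    moreover have "\<sigma>!(y-1) \<noteq> n"
    proof
      assume "\<sigma>!(y-1) = n"
      then have "y - 1 = k" using perm_nth_inj[OF assms(1), of "y-1" k] assms(2,3) that by simp
      then show False using that by simp
    qed
    ultimately show ?thesis using that assms ln by (auto simp: Inv_mem)
  qed
  show ?thesis
  proof
    assume "(i,j) \<in> lc (Inv \<sigma>)"
    then obtain k' where k': "1 \<le> i" "i \<le> k'" "(k',j) \<in> Inv \<sigma>" unfolding lc_mem by blast
    have jb: "j \<le> n" using k'(3) ln by (simp add: Inv_mem)
    consider "j \<le> k" | "j = k+1" | "k+1 < j" by linarith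
    then show "(i,j) \<in> lc (Inv (take k \<sigma>)) \<or> (1 \<le> i \<and> i \<le> k+1 \<and> k+1 < j \<and> j \<le> n)
      \<or> (k+1 < i \<and> (i-(k+1), j-(k+1)) \<in> lc (Inv (drop (k+1) \<sigma>)))"
    proof cases
      case 1
      then have "(k',j) \<in> Inv (take k \<sigma>)" using k'(3) Inv_take_mem by blast
      then show ?thesis using k' unfolding lc_mem by blast
    next
      case 2 then show ?thesis using k'(3) nomax by simp
    next
      case 3
      show ?thesis
      proof (cases "i \<le> k+1")
        case True then show ?thesis using 3 jb k' by simp
      next
        case False
        have e: "k' - (k+1) + (k+1) = k'" "j - (k+1) + (k+1) = j" using False k' 3 by auto
        have "(k' - (k+1), j - (k+1)) \<in> Inv (drop (k+1) \<sigma>)" unfolding Inv_drop_mem e using k' False by simp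
        moreover have "1 \<le> i - (k+1)" "i - (k+1) \<le> k' - (k+1)" using False k' by auto
        ultimately have "(i-(k+1), j-(k+1)) \<in> lc (Inv (drop (k+1) \<sigma>))" unfolding lc_mem by blast
        then show ?thesis using False by simp
      qed
    qed
  next
    assume "(i,j) \<in> lc (Inv (take k \<sigma>)) \<or> (1 \<le> i \<and> i \<le> k+1 \<and> k+1 < j \<and> j \<le> n)
      \<or> (k+1 < i \<and> (i-(k+1), j-(k+1)) \<in> lc (Inv (drop (k+1) \<sigma>)))"
    then consider (a) "(i,j) \<in> lc (Inv (take k \<sigma>))" | (b) "1 \<le> i \<and> i \<le> k+1 \<and> k+1 < j \<and> j \<le> n"
      | (c) "k+1 < i \<and> (i-(k+1), j-(k+1)) \<in> lc (Inv (drop (k+1) \<sigma>))" by blast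
    then show "(i,j) \<in> lc (Inv \<sigma>)"
    proof cases
      case a then show ?thesis unfolding lc_mem Inv_take_mem by blast
    next
      case b then show ?thesis unfolding lc_mem using maxinv[of j] by blast
    next
      case c
      then obtain k' where k': "1 \<le> i - (k+1)" "i - (k+1) \<le> k'" "(k', j - (k+1)) \<in> Inv (drop (k+1) \<sigma>)"
        unfolding lc_mem by blast
      then have "(k' + (k+1), j - (k+1) + (k+1)) \<in> Inv \<sigma>" unfolding Inv_drop_mem by blast
      moreover have "j - (k+1) + (k+1) = j" using c k'(3) unfolding Inv_drop_mem Inv_mem by auto
      ultimately have "(k' + (k+1), j) \<in> Inv \<sigma>" by simp
      moreover have "i \<le> k' + (k+1)" using k' c by auto
      ultimately show ?thesis unfolding lc_mem using c by auto
    qed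
  qed
qed

lemma lam_props:
  "\<sigma> \<in> perms n \<Longrightarrow> nodes (lam \<sigma>) = n \<and> (\<forall>i j. (i,j) \<in> Itr (lam \<sigma>) \<longleftrightarrow> (i,j) \<in> lc (Inv \<sigma>))"
proof (induction n arbitrary: \<sigma> rule: less_induct)
  case (less n)
  show ?case
  proof (cases "n = 0")
    case True
    then have "\<sigma> = []" using less.prems perms_length by blast
    then show ?thesis using True by (simp add: lam_def lc_mem Inv_mem)
  next
    case False
    then have n1: "1 \<le> n" by simp
    obtain A B where AB: "\<sigma> = A @ n # B" "n \<notin> set A" using perm_split_max[OF less.prems n1] by blast
    let ?k = "length A"
    have ln: "length \<sigma> = n" using less.prems perms_length by blast
    have d: "distinct \<sigma>" using less.prems by (simp add: perms_iff)
    then have dA: "distinct A" and dB: "distinct B" using AB(1) by auto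
    have tk: "take ?k \<sigma> = A" and dk: "drop (?k+1) \<sigma> = B" and nk: "\<sigma> ! ?k = n" using AB(1) by simp_all
    have kn: "?k < n" "length B = n - ?k - 1" using ln AB(1) by auto
    have IA: "nodes (lam (st A)) = ?k \<and> (\<forall>i j. (i,j) \<in> Itr (lam (st A)) \<longleftrightarrow> (i,j) \<in> lc (Inv (st A)))"
      using less.IH[of ?k "st A"] st_perm[OF dA] kn by simp
    have IB: "nodes (lam (st B)) = n - ?k - 1 \<and> (\<forall>i j. (i,j) \<in> Itr (lam (st B)) \<longleftrightarrow> (i,j) \<in> lc (Inv (st B)))"
      using less.IH[of "n - ?k - 1" "st B"] st_perm[OF dB] kn by simp
    have ls: "lam \<sigma> = Nd (lam (st A)) (lam (st B))" using lam_split[of A n B] less.prems AB by simp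
    have nn: "nodes (lam \<sigma>) = n" unfolding ls using IA IB kn by simp
    have "(i,j) \<in> Itr (lam \<sigma>) \<longleftrightarrow> (i,j) \<in> lc (Inv \<sigma>)" for i j
    proof -
      have "(i,j) \<in> Itr (lam \<sigma>) \<longleftrightarrow> (i,j) \<in> lc (Inv (st A)) \<or> (1 \<le> i \<and> i \<le> ?k + 1 \<and> ?k + 1 < j \<and> j \<le> ?k + (n - ?k - 1) + 1)
         \<or> (?k + 1 < i \<and> (i - (?k + 1), j - (?k + 1)) \<in> lc (Inv (st B)))"
        unfolding ls Itr_Nd_mem using IA IB by simp
      also have "?k + (n - ?k - 1) + 1 = n" using kn by simp
      also have "Inv (st A) = Inv (take ?k \<sigma>)" using tk Inv_st by simp
      also have "Inv (st B) = Inv (drop (?k+1) \<sigma>)" using dk Inv_st by simp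
      finally show ?thesis using lc_split[OF less.prems nk kn(1), of i j] by simp
    qed
    then show ?thesis using nn by blast
  qed
qed


definition gd :: "nat list \<Rightarrow> nat \<Rightarrow> nat \<Rightarrow> bool" where
  "gd \<sigma> n p \<longleftrightarrow> (\<forall>i j. 1 \<le> i \<longrightarrow> i \<le> p \<longrightarrow> p < j \<longrightarrow> j \<le> n \<longrightarrow> (i,j) \<in> Inv \<sigma>)"

lemma gd_split:
  assumes "\<sigma> \<in> perms n" "p \<le> n" "gd \<sigma> n p"
  shows "\<exists>\<alpha> \<beta>. \<alpha> \<in> perms p \<and> \<beta> \<in> perms (n - p) \<and> \<sigma> = pbs \<alpha> \<beta>"
proof -
  let ?T = "take p \<sigma>" and ?D = "drop p \<sigma>"
  have ln: "length \<sigma> = n" using assms(1) perms_length by blast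
  have d: "distinct \<sigma>" and s: "set \<sigma> = {1..n}" using assms(1) by (simp_all add: perms_iff)
  have big: "y < x" if hx: "x \<in> set ?T" and hy: "y \<in> set ?D" for x y
  proof -
    obtain a where a0: "a < length ?T" "?T ! a = x" using hx by (auto simp: in_set_conv_nth)
    then have a: "a < p" "x = \<sigma>!a" by auto
    obtain b where b0: "b < length ?D" "?D ! b = y" using hy by (auto simp: in_set_conv_nth)
    then have b: "b < n - p" "y = \<sigma>!(p+b)" using ln assms(2) by auto
    have "(a+1, p+b+1) \<in> Inv \<sigma>" using assms(3) a b unfolding gd_def by auto
    then show ?thesis using a b by (simp add: Inv_mem)
  qed
  have un: "set ?T \<union> set ?D = {1..n}" using s by (metis append_take_drop_id set_append)
  have dis: "set ?T \<inter> set ?D = {}" using d by (metis append_take_drop_id distinct_append)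
  have dT: "distinct ?T" and dD: "distinct ?D" using d by auto
  have cD: "card (set ?D) = n - p" using dD ln by (simp add: distinct_card)
  have cT: "card (set ?T) = p" using dT ln assms(2) by (simp add: distinct_card)
  have Dsub: "set ?D \<subseteq> {1..n-p}"
  proof
    fix y assume y: "y \<in> set ?D"
    then have y1: "y \<in> {1..n}" using un by blast
    have "{1..y} \<subseteq> set ?D"
    proof
      fix x assume x: "x \<in> {1..y}"
      then have "x \<in> {1..n}" using y1 by auto
      moreover have "x \<notin> set ?T" using big[OF _ y] x by force
      ultimately show "x \<in> set ?D" using un by blast
    qed
    then have "card {1..y} \<le> card (set ?D)" by (intro card_mono) auto
    then show "y \<in> {1..n-p}" using y1 cD by simp
  qed
  have Dset: "set ?D = {1..n-p}" using Dsub cD by (intro card_subset_eq) auto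
  have Tbig: "x > n - p" if "x \<in> set ?T" for x
  proof -
    have "x \<in> {1..n}" "x \<notin> set ?D" using that un dis by blast+
    then show ?thesis using Dset by auto
  qed
  let ?f = "\<lambda>a. a - (n - p)"
  let ?\<alpha> = "map ?f ?T"
  have injf: "inj_on ?f (set ?T)" by (rule inj_onI) (use Tbig in fastforce)
  have "?f ` set ?T \<subseteq> {1..p}"
  proof
    fix z assume "z \<in> ?f ` set ?T"
    then obtain x where x: "x \<in> set ?T" "z = ?f x" by blast
    have "x \<le> n" using x(1) un by auto
    then show "z \<in> {1..p}" using Tbig[OF x(1)] x(2) by auto
  qed
  moreover have "card (?f ` set ?T) = p" using card_image[OF injf] cT by simp
  ultimately have "?f ` set ?T = {1..p}" by (intro card_subset_eq) auto
  then have pa: "?\<alpha> \<in> perms p" using injf dT by (simp add: perms_iff distinct_map)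
  have pb: "?D \<in> perms (n - p)" using dD Dset by (simp add: perms_iff)
  have "map (\<lambda>a. a + length ?D) ?\<alpha> = ?T"
  proof -
    have "map (\<lambda>a. a + length ?D) ?\<alpha> = map (\<lambda>a. a - (n-p) + (n-p)) ?T" using ln by simp
    also have "\<dots> = ?T"
    proof (rule map_idI)
      fix x assume "x \<in> set ?T"
      then have "n - p < x" by (rule Tbig)
      then show "x - (n - p) + (n - p) = x" by simp
    qed
    finally show ?thesis .
  qed
  then have "\<sigma> = pbs ?\<alpha> ?D" unfolding pbs_def by simp
  then show ?thesis using pa pb by blast
qed

lemma GDes_iff:
  assumes "\<sigma> \<in> perms n"
  shows "p \<in> GDes \<sigma> \<longleftrightarrow> 1 \<le> p \<and> p < n \<and> gd \<sigma> n p"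
proof
  have ln: "length \<sigma> = n" using assms perms_length by blast
  assume "p \<in> GDes \<sigma>"
  then obtain \<alpha> \<beta> where h: "1 \<le> p" "p < n" "\<alpha> \<in> perms p" "\<beta> \<in> perms (n - p)" "\<sigma> = pbs \<alpha> \<beta>"
    unfolding GDes_def ln by blast
  have "gd \<sigma> n p" unfolding gd_def h(5) using Inv_pbs_mem[OF h(3,4)] h(2) by auto
  then show "1 \<le> p \<and> p < n \<and> gd \<sigma> n p" using h by simp
next
  have ln: "length \<sigma> = n" using assms perms_length by blast
  assume "1 \<le> p \<and> p < n \<and> gd \<sigma> n p"
  then show "p \<in> GDes \<sigma>" unfolding GDes_def ln using gd_split[OF assms] by auto
qed

lemma GDes_sub: "GDes \<sigma> \<subseteq> {1..<length \<sigma>}"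
  unfolding GDes_def by auto

definition jj :: "nat list \<Rightarrow> nat" where
  "jj \<sigma> = (if GDes \<sigma> = {} then length \<sigma> else Min (GDes \<sigma>))"

lemma jj_props:
  assumes "\<sigma> \<in> perms n" "1 \<le> n"
  shows "1 \<le> jj \<sigma> \<and> jj \<sigma> \<le> n \<and> gd \<sigma> n (jj \<sigma>) \<and> (\<forall>c \<in> GDes \<sigma>. jj \<sigma> \<le> c)"
proof -
  have ln: "length \<sigma> = n" using assms perms_length by blast
  have fin: "finite (GDes \<sigma>)" using GDes_sub finite_subset by blast
  show ?thesis
  proof (cases "GDes \<sigma> = {}")
    case True
    then show ?thesis using ln assms(2) by (simp add: jj_def gd_def)
  next
    case False
    then have m: "Min (GDes \<sigma>) \<in> GDes \<sigma>" using fin by simp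
    have j: "jj \<sigma> = Min (GDes \<sigma>)" using False by (simp add: jj_def)
    have "\<forall>c \<in> GDes \<sigma>. jj \<sigma> \<le> c" unfolding j using fin by simp
    then show ?thesis using m GDes_iff[OF assms(1)] unfolding j by auto
  qed
qed

lemma rhof_Suc: "\<sigma> \<noteq> [] \<Longrightarrow> rhof (Suc m) \<sigma> = Nd (rhof m (st (take (jj \<sigma> - 1) \<sigma>))) (rhof m (st (drop (jj \<sigma>) \<sigma>)))"
  by (simp add: jj_def Let_def)

lemma rhof_fuel:
  "xs \<in> perms (length xs) \<Longrightarrow> length xs \<le> m \<Longrightarrow> length xs \<le> m' \<Longrightarrow> rhof m xs = rhof m' xs"
proof (induction m arbitrary: m' xs)
  case 0
  then have "xs = []" by simp
  then show ?case by (cases m') simp_all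
next
  case (Suc m)
  show ?case
  proof (cases "xs = []")
    case True then show ?thesis by (cases m') simp_all
  next
    case False
    obtain k where kdef: "length xs = k" by blast
    have k1: "1 \<le> k" using False kdef by (cases xs) auto
    have pk: "xs \<in> perms k" using Suc.prems(1) kdef by simp
    obtain m'' where m': "m' = Suc m''" using Suc.prems(3) k1 kdef by (cases m') auto
    have j1: "1 \<le> jj xs" and j2: "jj xs \<le> k" using jj_props[OF pk k1] by blast+
    have d: "distinct xs" using pk by (simp add: perms_iff)
    let ?A = "take (jj xs - 1) xs" and ?B = "drop (jj xs) xs"
    have dA: "distinct ?A" and dB: "distinct ?B" using d by auto
    have lA: "length ?A = jj xs - 1" "length ?B = k - jj xs" using kdef j1 j2 by auto
    have "rhof m (st ?A) = rhof m'' (st ?A)"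
      using Suc.IH[of "st ?A" m''] st_perm[OF dA] lA j1 j2 Suc.prems(2,3) m' kdef by simp
    moreover have "rhof m (st ?B) = rhof m'' (st ?B)"
      using Suc.IH[of "st ?B" m''] st_perm[OF dB] lA j1 j2 Suc.prems(2,3) m' kdef by simp
    ultimately show ?thesis unfolding m' using rhof_Suc[OF False, of m] rhof_Suc[OF False, of m''] by simp
  qed
qed

lemma rho_split:
  assumes "\<sigma> \<in> perms n" "1 \<le> n"
  shows "rho \<sigma> = Nd (rho (st (take (jj \<sigma> - 1) \<sigma>))) (rho (st (drop (jj \<sigma>) \<sigma>)))"
proof -
  have ln: "length \<sigma> = n" using assms perms_length by blast
  obtain m where m: "n = Suc m" using assms(2) by (cases n) auto
  have ne: "\<sigma> \<noteq> []" using ln assms(2) by auto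
  have j1: "1 \<le> jj \<sigma>" and j2: "jj \<sigma> \<le> n" using jj_props[OF assms] by blast+
  have d: "distinct \<sigma>" using assms by (simp add: perms_iff)
  let ?A = "take (jj \<sigma> - 1) \<sigma>" and ?B = "drop (jj \<sigma>) \<sigma>"
  have dA: "distinct ?A" and dB: "distinct ?B" using d by auto
  have lA: "length ?A \<le> m" "length ?B \<le> m" using ln j1 j2 m by auto
  have "rho \<sigma> = rhof (Suc m) \<sigma>" unfolding rho_def using ln m by simp
  also have "\<dots> = Nd (rhof m (st ?A)) (rhof m (st ?B))" by (rule rhof_Suc[OF ne])
  also have "rhof m (st ?A) = rho (st ?A)"
    unfolding rho_def using rhof_fuel[of "st ?A" m "length ?A"] st_perm[OF dA] lA by simp
  also have "rhof m (st ?B) = rho (st ?B)"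
    unfolding rho_def using rhof_fuel[of "st ?B" m "length ?B"] st_perm[OF dB] lA by simp
  finally show ?thesis .
qed


lemma rho_props:
  "\<sigma> \<in> perms n \<Longrightarrow> nodes (rho \<sigma>) = n \<and> Itr (rho \<sigma>) \<subseteq> Inv \<sigma> \<and>
     (\<forall>t. nodes t = n \<longrightarrow> Itr t \<subseteq> Inv \<sigma> \<longrightarrow> Itr t \<subseteq> Itr (rho \<sigma>))"
proof (induction n arbitrary: \<sigma> rule: less_induct)
  case (less n)
  show ?case
  proof (cases "n = 0")
    case True
    then have s0: "\<sigma> = []" using less.prems perms_length by blast
    have "Itr t = {}" if "nodes t = 0" for t using that by (cases t) auto
    then show ?thesis using s0 True by (simp add: rho_def)
  next
    case False
    then have n1: "1 \<le> n" by simp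
    define j where "j = jj \<sigma>"
    have jp: "1 \<le> j" "j \<le> n" "gd \<sigma> n j" "\<And>c. c \<in> GDes \<sigma> \<Longrightarrow> j \<le> c"
      using jj_props[OF less.prems n1] unfolding j_def by blast+
    have ln: "length \<sigma> = n" using less.prems perms_length by blast
    have d: "distinct \<sigma>" using less.prems by (simp add: perms_iff)
    define A where "A = st (take (j-1) \<sigma>)"
    define B where "B = st (drop j \<sigma>)"
    have pA: "A \<in> perms (j-1)" unfolding A_def using st_perm[of "take (j-1) \<sigma>"] d ln jp by simp
    have pB: "B \<in> perms (n-j)" unfolding B_def using st_perm[of "drop j \<sigma>"] d ln jp by simp
    have InvA: "(x,y) \<in> Inv A \<longleftrightarrow> (x,y) \<in> Inv \<sigma> \<and> y \<le> j-1" for x y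
      unfolding A_def Inv_st_mem Inv_take_mem by (rule refl)
    have InvB: "(x,y) \<in> Inv B \<longleftrightarrow> 1 \<le> x \<and> (x+j, y+j) \<in> Inv \<sigma>" for x y
      unfolding B_def Inv_st_mem Inv_drop_mem by (rule refl)
    have IHA: "nodes (rho A) = j-1 \<and> Itr (rho A) \<subseteq> Inv A \<and>
      (\<forall>t. nodes t = j-1 \<longrightarrow> Itr t \<subseteq> Inv A \<longrightarrow> Itr t \<subseteq> Itr (rho A))"
      using less.IH[of "j-1" A] pA jp by simp
    have IHB: "nodes (rho B) = n-j \<and> Itr (rho B) \<subseteq> Inv B \<and>
      (\<forall>t. nodes t = n-j \<longrightarrow> Itr t \<subseteq> Inv B \<longrightarrow> Itr t \<subseteq> Itr (rho B))"
      using less.IH[of "n-j" B] pB jp by simp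
    have rs: "rho \<sigma> = Nd (rho A) (rho B)" unfolding A_def B_def j_def by (rule rho_split[OF less.prems n1])
    have nr: "nodes (rho \<sigma>) = n" unfolding rs using IHA IHB jp by simp
    have mem: "(x,y) \<in> Itr (rho \<sigma>) \<longleftrightarrow> (x,y) \<in> Itr (rho A) \<or> (1 \<le> x \<and> x \<le> j \<and> j < y \<and> y \<le> n)
       \<or> (j < x \<and> (x - j, y - j) \<in> Itr (rho B))" for x y
    proof -
      have e: "nodes (rho A) + 1 = j" "nodes (rho A) + nodes (rho B) + 1 = n" using IHA IHB jp by auto
      show ?thesis unfolding rs Itr_Nd_mem e by (rule refl)
    qed
    have P2: "Itr (rho \<sigma>) \<subseteq> Inv \<sigma>"
    proof
      fix z assume "z \<in> Itr (rho \<sigma>)"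
      then obtain x y where z: "z = (x,y)" "(x,y) \<in> Itr (rho \<sigma>)" by (cases z) auto
      consider (a) "(x,y) \<in> Itr (rho A)" | (b) "1 \<le> x \<and> x \<le> j \<and> j < y \<and> y \<le> n"
        | (c) "j < x \<and> (x - j, y - j) \<in> Itr (rho B)" using z(2) unfolding mem by blast
      then show "z \<in> Inv \<sigma>"
      proof cases
        case a
        then have "(x,y) \<in> Inv A" using IHA by blast
        then show ?thesis using z InvA by simp
      next
        case b then show ?thesis using z jp(3) unfolding gd_def by simp
      next
        case c
        then have "(x - j, y - j) \<in> Inv B" using IHB by blast
        then have "(x - j + j, y - j + j) \<in> Inv \<sigma>" using InvB by simp
        moreover have "x - j + j = x" "y - j + j = y" using c Itr_bound[of "x-j" "y-j" "rho B"] by auto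
        ultimately show ?thesis using z by simp
      qed
    qed
    have P3: "Itr t \<subseteq> Itr (rho \<sigma>)" if nt: "nodes t = n" and sub: "Itr t \<subseteq> Inv \<sigma>" for t
    proof
      fix z assume "z \<in> Itr t"
      then obtain a b where z: "z = (a,b)" "(a,b) \<in> Itr t" by (cases z) auto
      have bd: "1 \<le> a" "a < b" "b \<le> n" using Itr_bound[OF z(2)] nt by auto
      consider (L) "b \<le> j - 1" | (M) "a \<le> j \<and> j < b" | (R) "j < a" | (J) "b = j" by linarith
      then show "z \<in> Itr (rho \<sigma>)"
      proof cases
        case L
        let ?t = "rp (j-1) t"
        have ntt: "nodes ?t = j - 1" using nodes_rp[of "j-1" t] nt jp by simp
        have "Itr ?t \<subseteq> Inv A"
        proof
          fix w assume "w \<in> Itr ?t"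
          then obtain x y where w: "w = (x,y)" "(x,y) \<in> Itr ?t" by (cases w) auto
          then have "(x,y) \<in> Itr t" "y \<le> j - 1" using Itr_rp by blast+
          then show "w \<in> Inv A" using w(1) sub InvA by blast
        qed
        then have "Itr ?t \<subseteq> Itr (rho A)" using IHA ntt by blast
        moreover have "(a,b) \<in> Itr ?t" using z(2) L Itr_rp by blast
        ultimately have "(a,b) \<in> Itr (rho A)" by blast
        then show ?thesis using z(1) mem by blast
      next
        case M then show ?thesis using z(1) mem bd by simp
      next
        case R
        let ?t = "rs j t"
        have ntt: "nodes ?t = n - j" using nodes_rs[of j t] nt by simp
        have "Itr ?t \<subseteq> Inv B"
        proof
          fix w assume "w \<in> Itr ?t"
          then obtain x y where w: "w = (x,y)" "(x,y) \<in> Itr ?t" by (cases w) auto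
          then have "1 \<le> x" "(x+j,y+j) \<in> Itr t" using Itr_rs by blast+
          then show "w \<in> Inv B" using w(1) sub InvB by blast
        qed
        then have "Itr ?t \<subseteq> Itr (rho B)" using IHB ntt by blast
        moreover have "(a - j, b - j) \<in> Itr ?t"
        proof -
          have "a - j + j = a" "b - j + j = b" "1 \<le> a - j" using R bd by auto
          then show ?thesis unfolding Itr_rs using z(2) by simp
        qed
        ultimately have "(a - j, b - j) \<in> Itr (rho B)" by blast
        then show ?thesis using z(1) mem R by blast
      next
        case J
        define S where "S = {x. 1 \<le> x \<and> x < j \<and> (x, j) \<in> Itr t}"
        have aS: "a \<in> S" unfolding S_def using J bd z(2) by simp
        have finS: "finite S" unfolding S_def by (rule finite_subset[of _ "{..<j}"]) auto
        define c where "c = Max S"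
        have cS: "c \<in> S" unfolding c_def using aS finS by (intro Max_in) auto
        have cmax: "x \<le> c" if "x \<in> S" for x unfolding c_def using that finS by simp
        have c1: "1 \<le> c" "c < j" "(c, j) \<in> Itr t" using cS unfolding S_def by auto
        have "gd \<sigma> n c" unfolding gd_def
        proof (intro allI impI)
          fix x y assume h: "1 \<le> x" "x \<le> c" "c < y" "y \<le> n"
          have xj: "(x, j) \<in> Itr t" using Itr_leftclosed[OF c1(3) h(1) h(2)] .
          consider "y = j" | "y < j" | "j < y" by linarith
          then show "(x,y) \<in> Inv \<sigma>"
          proof cases
            case 1 then show ?thesis using xj sub by blast
          next
            case 2
            have "y \<notin> S" using cmax h(3) by fastforce
            then have "(y, j) \<notin> Itr t" unfolding S_def using 2 h c1 by simp
            then have "(x,y) \<in> Itr t" using Itr_cotrans[OF xj, of y] h 2 by linarith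
            then show ?thesis using sub by blast
          next
            case 3 then show ?thesis using jp(3) h c1 unfolding gd_def by simp
          qed
        qed
        then have "c \<in> GDes \<sigma>" using GDes_iff[OF less.prems] c1 jp by simp
        then have "j \<le> c" by (rule jp(4))
        then show ?thesis using c1 by simp
      qed
    qed
    show ?thesis using nr P2 P3 by blast
  qed
qed


lemma Des_mem: "i \<in> Des \<sigma> \<longleftrightarrow> 1 \<le> i \<and> i < length \<sigma> \<and> (i, i+1) \<in> Inv \<sigma>"
  by (auto simp: Des_def Inv_mem)

lemma inv_has_des: "(i,j) \<in> Inv \<sigma> \<Longrightarrow> \<exists>k. i \<le> k \<and> k < j \<and> (k, k+1) \<in> Inv \<sigma>"
proof (induction j arbitrary: i)
  case 0 then show ?case by (simp add: Inv_mem)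
next
  case (Suc j)
  show ?case
  proof (cases "(j, j+1) \<in> Inv \<sigma>")
    case True
    have "i \<le> j" using Suc.prems by (simp add: Inv_mem)
    then show ?thesis using True by auto
  next
    case False
    have h: "1 \<le> i" "i < Suc j" "Suc j \<le> length \<sigma>" "\<sigma>!(i-1) > \<sigma>!j" using Suc.prems by (auto simp: Inv_mem)
    have "i \<noteq> j" using False Suc.prems by auto
    then have ij: "i < j" using h by simp
    then have "\<sigma>!(j-1) \<le> \<sigma>!j" using False h by (auto simp: Inv_mem)
    then have "(i, j) \<in> Inv \<sigma>" using h ij by (auto simp: Inv_mem)
    then obtain k where "i \<le> k" "k < j" "(k, k+1) \<in> Inv \<sigma>" using Suc.IH by blast
    then show ?thesis by (intro exI[of _ k]) simp
  qed
qed

definition blk :: "nat \<Rightarrow> nat list \<Rightarrow> nat \<Rightarrow> nat list" where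
  "blk c ps n = map (\<lambda>(a,b). a - b) (zip (ps @ [n]) (c # ps))"

lemma blk_Nil: "blk c [] n = [n - c]"
  by (simp add: blk_def)

lemma blk_Cons: "blk c (p # ps) n = (p - c) # blk p ps n"
  by (simp add: blk_def)

lemma idp_perm: "idp k \<in> perms k"
  by (simp add: idp_def perms_iff atLeastLessThanSuc_atLeastAtMost del: upt_Suc)

lemma Inv_idp: "(i,j) \<notin> Inv (idp k)"
  by (auto simp: idp_def Inv_mem nth_upt simp del: upt_Suc)

lemma pbs_Nil: "pbs x [] = x"
  by (simp add: pbs_def)

lemma Zl_props:
  "sorted_wrt (<) (c # ps) \<Longrightarrow> (\<forall>s \<in> set ps. s < n) \<Longrightarrow> c \<le> n \<Longrightarrow>
   foldr pbs (map idp (blk c ps n)) [] \<in> perms (n - c) \<and>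
   (\<forall>i j. (i,j) \<in> Inv (foldr pbs (map idp (blk c ps n)) []) \<longleftrightarrow>
      1 \<le> i \<and> i < j \<and> j \<le> n - c \<and> (\<exists>s \<in> set ps. i \<le> s - c \<and> s - c < j))"
proof (induction ps arbitrary: c)
  case Nil
  then show ?case by (simp add: blk_Nil pbs_Nil idp_perm Inv_idp)
next
  case (Cons p ps)
  have cp: "c < p" and pn: "p < n" and srt: "sorted_wrt (<) (p # ps)" and big: "\<forall>s\<in>set ps. p < s"
    using Cons.prems by auto
  let ?Z = "foldr pbs (map idp (blk p ps n)) []"
  have IH: "?Z \<in> perms (n - p) \<and> (\<forall>i j. (i,j) \<in> Inv ?Z \<longleftrightarrow>
      1 \<le> i \<and> i < j \<and> j \<le> n - p \<and> (\<exists>s \<in> set ps. i \<le> s - p \<and> s - p < j))"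
    using Cons.IH[OF srt] Cons.prems pn by simp
  have eq: "foldr pbs (map idp (blk c (p # ps) n)) [] = pbs (idp (p - c)) ?Z"
    by (simp add: blk_Cons)
  have perm: "pbs (idp (p - c)) ?Z \<in> perms (n - c)"
    using pbs_perm[OF idp_perm, of ?Z "n - p" "p - c"] IH cp pn by simp
  have mem: "(i,j) \<in> Inv (pbs (idp (p - c)) ?Z) \<longleftrightarrow>
      1 \<le> i \<and> i < j \<and> j \<le> n - c \<and> (\<exists>s \<in> set (p # ps). i \<le> s - c \<and> s - c < j)" for i j
  proof -
    have "(i,j) \<in> Inv (pbs (idp (p - c)) ?Z) \<longleftrightarrow> (1 \<le> i \<and> i \<le> p - c \<and> p - c < j \<and> j \<le> p - c + (n - p))
        \<or> (p - c < i \<and> (i - (p - c), j - (p - c)) \<in> Inv ?Z)"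
      using Inv_pbs_mem[OF idp_perm, of ?Z "n - p" i j "p - c"] IH Inv_idp by blast
    also have "\<dots> \<longleftrightarrow> 1 \<le> i \<and> i < j \<and> j \<le> n - c \<and> (\<exists>s \<in> set (p # ps). i \<le> s - c \<and> s - c < j)"
    proof
      assume "(1 \<le> i \<and> i \<le> p - c \<and> p - c < j \<and> j \<le> p - c + (n - p))
        \<or> (p - c < i \<and> (i - (p - c), j - (p - c)) \<in> Inv ?Z)"
      then show "1 \<le> i \<and> i < j \<and> j \<le> n - c \<and> (\<exists>s \<in> set (p # ps). i \<le> s - c \<and> s - c < j)"
      proof
        assume "1 \<le> i \<and> i \<le> p - c \<and> p - c < j \<and> j \<le> p - c + (n - p)"
        then show ?thesis using cp pn by auto
      next
        assume h: "p - c < i \<and> (i - (p - c), j - (p - c)) \<in> Inv ?Z"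
        then obtain s where s: "s \<in> set ps" "i - (p - c) \<le> s - p" "s - p < j - (p - c)"
          "1 \<le> i - (p - c)" "i - (p - c) < j - (p - c)" "j - (p - c) \<le> n - p" using IH by blast
        have "p < s" using big s(1) by simp
        then have "i \<le> s - c" "s - c < j" using s(2,3) h cp by auto
        moreover have "1 \<le> i" "i < j" "j \<le> n - c" using s(4,5,6) h cp pn by auto
        ultimately show ?thesis using s(1) by auto
      qed
    next
      assume h: "1 \<le> i \<and> i < j \<and> j \<le> n - c \<and> (\<exists>s \<in> set (p # ps). i \<le> s - c \<and> s - c < j)"
      then obtain s where s: "s \<in> set (p # ps)" "i \<le> s - c" "s - c < j" by blast
      show "(1 \<le> i \<and> i \<le> p - c \<and> p - c < j \<and> j \<le> p - c + (n - p))
        \<or> (p - c < i \<and> (i - (p - c), j - (p - c)) \<in> Inv ?Z)"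
      proof (cases "i \<le> p - c \<and> p - c < j")
        case True then show ?thesis using h cp pn by auto
      next
        case False
        have "s \<noteq> p" using False s by auto
        then have sp: "s \<in> set ps" "p < s" using s(1) big by auto
        then have ipc: "p - c < i" using False s cp by auto
        have "i - (p - c) \<le> s - p" "s - p < j - (p - c)" "1 \<le> i - (p - c)" "i - (p - c) < j - (p - c)"
          "j - (p - c) \<le> n - p" using s sp ipc h cp pn by auto
        then have "(i - (p - c), j - (p - c)) \<in> Inv ?Z" using IH sp(1) by blast
        then show ?thesis using ipc by simp
      qed
    qed
    finally show ?thesis .
  qed
  show ?case unfolding eq using perm mem by blast
qed

definition sep :: "nat set \<Rightarrow> nat \<Rightarrow> (nat \<times> nat) set" where
  "sep S n = {(i,j). 1 \<le> i \<and> i < j \<and> j \<le> n \<and> (\<exists>s \<in> S. i \<le> s \<and> s < j)}"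

lemma Q_iff: "S \<in> Q n \<longleftrightarrow> S \<subseteq> {1..n-1}"
  by (simp add: Q_def)

lemma Z_props:
  assumes "S \<in> Q n"
  shows "Z n S \<in> perms n" "Inv (Z n S) = sep S n"
proof -
  have fin: "finite S" using assms unfolding Q_iff using finite_subset by blast
  let ?ps = "sorted_list_of_set S"
  have sps: "set ?ps = S" using fin by simp
  have srt: "sorted_wrt (<) (0 # ?ps)" using assms sps unfolding Q_iff
    by (auto simp: strict_sorted_list_of_set)
  have lt: "\<forall>s \<in> set ?ps. s < n"
  proof
    fix s assume "s \<in> set ?ps"
    then have "s \<in> {1..n-1}" using assms sps unfolding Q_iff by blast
    then show "s < n" by auto
  qed
  have bl: "blocks n S = blk 0 ?ps n" by (simp add: blocks_def blk_def Let_def)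
  have P: "Z n S \<in> perms n \<and> (\<forall>i j. (i,j) \<in> Inv (Z n S) \<longleftrightarrow>
      1 \<le> i \<and> i < j \<and> j \<le> n \<and> (\<exists>s \<in> S. i \<le> s \<and> s < j))"
    using Zl_props[OF srt lt] sps unfolding Z_def bl by simp
  then show "Z n S \<in> perms n" by blast
  show "Inv (Z n S) = sep S n" unfolding sep_def using P by auto
qed

lemma gam_tbs: "gam (tbs s t) = pbs (gam s) (gam t)"
proof (induction s)
  case Lf then show ?case by (simp add: pbs_def)
next
  case (Nd l r)
  have "pvee (gam l) (pbs (gam r) (gam t)) = pbs (pvee (gam l) (gam r)) (gam t)"
    by (simp add: pvee_def pbs_def ac_simps)
  then show ?case using Nd by simp
qed

lemma gam_one: "gam (one k) = idp k"
  by (induction k) (simp_all add: idp_def pvee_def)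

lemma gam_foldr: "gam (foldr tbs (map one bs) Lf) = foldr pbs (map idp bs) []"
  by (induction bs) (simp_all add: gam_tbs gam_one)

lemma gam_C: "gam (C n S) = Z n S"
  unfolding C_def Z_def by (rule gam_foldr)

lemma C_props:
  assumes "S \<in> Q n"
  shows "nodes (C n S) = n" "Itr (C n S) = sep S n"
proof -
  show "nodes (C n S) = n" using length_gam[of "C n S"] gam_C Z_props(1)[OF assms] perms_length by metis
  show "Itr (C n S) = sep S n" using Inv_gam[of "C n S"] gam_C Z_props(2)[OF assms] by simp
qed

lemma leafdirs_len: "length (leafdirs b t) = nodes t + 1"
  by (induction t arbitrary: b) auto

lemma leafdirs_last: "t \<noteq> Lf \<Longrightarrow> leafdirs b t ! nodes t = False"
proof (induction t arbitrary: b)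
  case Lf then show ?case by simp
next
  case (Nd l r)
  have "leafdirs b (Nd l r) ! nodes (Nd l r) = leafdirs False r ! nodes r"
    using leafdirs_len[of True l] by (simp add: nth_append)
  also have "\<dots> = False" using Nd.IH(2) by (cases "r = Lf") auto
  finally show ?case .
qed

lemma leafdirs_first: "t \<noteq> Lf \<Longrightarrow> leafdirs b t ! 0 = True"
proof (induction t arbitrary: b)
  case Lf then show ?case by simp
next
  case (Nd l r)
  have "leafdirs b (Nd l r) ! 0 = leafdirs True l ! 0"
    using leafdirs_len[of True l] by (simp add: nth_append)
  also have "\<dots> = True" using Nd.IH(1) by (cases "l = Lf") auto
  finally show ?case .
qed

lemma leafdirs_nth: "1 \<le> i \<Longrightarrow> i < nodes t \<Longrightarrow> leafdirs b t ! i \<longleftrightarrow> (i, i+1) \<in> Itr t"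
proof (induction t arbitrary: b i)
  case Lf then show ?case by simp
next
  case (Nd l r)
  let ?p = "nodes l"
  have ll: "length (leafdirs True l) = ?p + 1" by (rule leafdirs_len)
  consider "i < ?p" | "i = ?p" | "i = ?p + 1" | "?p + 1 < i" by linarith
  then show ?case
  proof cases
    case 1
    have "leafdirs b (Nd l r) ! i = leafdirs True l ! i" using 1 ll by (simp add: nth_append)
    moreover have "(i, i+1) \<in> Itr (Nd l r) \<longleftrightarrow> (i, i+1) \<in> Itr l"
      using 1 Itr_Nd_inv1[of i "i+1" l r] Itr_Nd_sub1[of i "i+1" l r] by auto
    ultimately show ?thesis using Nd.IH(1)[of i True] 1 Nd.prems by simp
  next
    case 2
    then have lnl: "l \<noteq> Lf" using Nd.prems by auto
    have "leafdirs b (Nd l r) ! i = leafdirs True l ! ?p" using 2 ll by (simp add: nth_append)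
    also have "\<dots> = False" using leafdirs_last[OF lnl] .
    finally show ?thesis using Itr_Nd_root[of i l r] 2 by simp
  next
    case 3
    then have rnl: "r \<noteq> Lf" using Nd.prems by auto
    have "leafdirs b (Nd l r) ! i = leafdirs False r ! 0" using 3 ll by (simp add: nth_append)
    also have "\<dots> = True" using leafdirs_first[OF rnl] .
    finally show ?thesis using Itr_Nd_cross[of i l "i+1" r] 3 Nd.prems by simp
  next
    case 4
    let ?i = "i - (?p + 1)"
    have "leafdirs b (Nd l r) ! i = leafdirs False r ! ?i" using 4 ll by (simp add: nth_append)
    moreover have "1 \<le> ?i" "?i < nodes r" using 4 Nd.prems by auto
    moreover have "(i, i+1) \<in> Itr (Nd l r) \<longleftrightarrow> (?i, ?i + 1) \<in> Itr r"
    proof -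
      have e: "?i + (?p + 1) = i" "?i + 1 + (?p + 1) = i + 1" using 4 by auto
      show ?thesis using Itr_Nd_sub3[of ?i "?i+1" r l] Itr_Nd_inv3[of ?i l "?i+1" r] e \<open>1 \<le> ?i\<close> by auto
    qed
    ultimately show ?thesis using Nd.IH(2)[of ?i False] by simp
  qed
qed

lemma L_Itr: "L t = {i. 1 \<le> i \<and> i < nodes t \<and> (i, i+1) \<in> Itr t}"
  unfolding L_def using leafdirs_nth by blast

lemma L_Des: "L t = Des (gam t)"
  unfolding L_Itr set_eq_iff Des_mem length_gam Inv_gam by blast

lemma nodes_tbs: "nodes (tbs r r') = nodes r + nodes r'"
  by (induction r) auto

lemma tbs_gd:
  "1 \<le> j \<Longrightarrow> j < nodes t \<Longrightarrow> (\<exists>r r'. nodes r = j \<and> t = tbs r r') \<longleftrightarrow> gd (gam t) (nodes t) j"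
proof
  assume "\<exists>r r'. nodes r = j \<and> t = tbs r r'"
  then obtain r r' where rr: "nodes r = j" "t = tbs r r'" by blast
  show "gd (gam t) (nodes t) j"
    unfolding gd_def rr(2) gam_tbs nodes_tbs Inv_pbs_mem[OF gam_perm gam_perm] rr(1) by auto
next
  assume "1 \<le> j" "j < nodes t" "gd (gam t) (nodes t) j"
  then show "\<exists>r r'. nodes r = j \<and> t = tbs r r'"
  proof (induction t arbitrary: j)
    case Lf then show ?case by simp
  next
    case (Nd l r0)
    let ?p = "nodes l"
    have G: "(i,k) \<in> Itr (Nd l r0)" if "1 \<le> i" "i \<le> j" "j < k" "k \<le> nodes (Nd l r0)" for i k
      using Nd.prems(3) that unfolding gd_def Inv_gam by blast
    consider "j \<le> ?p" | "j = ?p + 1" | "?p + 1 < j" by linarith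
    then show ?case
    proof cases
      case 1
      then have "(j, ?p + 1) \<in> Itr (Nd l r0)" using G[of j "?p+1"] Nd.prems by simp
      then show ?thesis using Itr_Nd_root by blast
    next
      case 2
      then show ?thesis by (intro exI[of _ "Nd l Lf"] exI[of _ r0]) simp
    next
      case 3
      let ?j = "j - (?p + 1)"
      have "gd (gam r0) (nodes r0) ?j" unfolding gd_def Inv_gam
      proof (intro allI impI)
        fix i k assume h: "1 \<le> i" "i \<le> ?j" "?j < k" "k \<le> nodes r0"
        have "(i + (?p+1), k + (?p+1)) \<in> Itr (Nd l r0)" using G[of "i + (?p+1)" "k + (?p+1)"] h 3 by simp
        then show "(i,k) \<in> Itr r0" using Itr_Nd_inv3 h(1) by blast
      qed
      moreover have "1 \<le> ?j" "?j < nodes r0" using 3 Nd.prems by auto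
      ultimately obtain r1 r' where "nodes r1 = ?j" "r0 = tbs r1 r'" using Nd.IH(2) by blast
      then show ?thesis using 3 by (intro exI[of _ "Nd l r1"] exI[of _ r']) auto
    qed
  qed
qed

lemma R_GDes: "R t = GDes (gam t)"
proof -
  have "R t = {j. 1 \<le> j \<and> j < nodes t \<and> gd (gam t) (nodes t) j}"
    unfolding R_def using tbs_gd by blast
  also have "\<dots> = GDes (gam t)" using GDes_iff[OF gam_perm] by blast
  finally show ?thesis .
qed


lemma Y_iff: "t \<in> Y n \<longleftrightarrow> nodes t = n"
  by (simp add: Y_def)

lemma weak_iff: "weak_le \<sigma> \<tau> \<longleftrightarrow> Inv \<sigma> \<subseteq> Inv \<tau>"
  by (simp add: weak_le_def)

lemma lam_Itr: "\<sigma> \<in> perms n \<Longrightarrow> Itr (lam \<sigma>) = lc (Inv \<sigma>)"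
proof -
  assume p: "\<sigma> \<in> perms n"
  have "\<forall>i j. (i,j) \<in> Itr (lam \<sigma>) \<longleftrightarrow> (i,j) \<in> lc (Inv \<sigma>)" using lam_props[OF p] by (rule conjunct2)
  then show ?thesis by (intro set_eqI) (metis prod.collapse)
qed

lemma lam_nodes: "\<sigma> \<in> perms n \<Longrightarrow> nodes (lam \<sigma>) = n"
  using lam_props by (rule conjunct1)

lemma Inv_sub_lc: "Inv \<sigma> \<subseteq> lc (Inv \<sigma>)"
  by (auto simp: lc_mem Inv_mem)

lemma lc_sub_Itr: "Inv \<sigma> \<subseteq> Itr t \<Longrightarrow> lc (Inv \<sigma>) \<subseteq> Itr t"
proof
  fix z assume h: "Inv \<sigma> \<subseteq> Itr t" "z \<in> lc (Inv \<sigma>)"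
  then obtain i j k where z: "z = (i,j)" "1 \<le> i" "i \<le> k" "(k,j) \<in> Inv \<sigma>" by (auto simp: lc_def)
  then have "(k,j) \<in> Itr t" using h(1) by blast
  then show "z \<in> Itr t" using Itr_leftclosed z by blast
qed

lemma lc_mono: "X \<subseteq> X' \<Longrightarrow> lc X \<subseteq> lc X'"
  by (auto simp: lc_def)

lemma galois1:
  assumes "\<sigma> \<in> perms n" "nodes t = n"
  shows "tamari_le (lam \<sigma>) t \<longleftrightarrow> weak_le \<sigma> (gam t)"
proof -
  have "tamari_le (lam \<sigma>) t \<longleftrightarrow> lc (Inv \<sigma>) \<subseteq> Itr t"
    using tamari_iff[of "lam \<sigma>" t] lam_nodes[OF assms(1)] lam_Itr[OF assms(1)] assms(2) by simp
  also have "\<dots> \<longleftrightarrow> Inv \<sigma> \<subseteq> Itr t" using Inv_sub_lc lc_sub_Itr by blast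
  finally show ?thesis unfolding weak_iff Inv_gam .
qed

lemma rho_nodes: "\<sigma> \<in> perms n \<Longrightarrow> nodes (rho \<sigma>) = n"
  using rho_props by (rule conjunct1)

lemma rho_sub: "\<sigma> \<in> perms n \<Longrightarrow> Itr (rho \<sigma>) \<subseteq> Inv \<sigma>"
  using rho_props by (metis conjunct1 conjunct2)

lemma rho_max: "\<sigma> \<in> perms n \<Longrightarrow> nodes t = n \<Longrightarrow> Itr t \<subseteq> Inv \<sigma> \<Longrightarrow> Itr t \<subseteq> Itr (rho \<sigma>)"
proof -
  assume p: "\<sigma> \<in> perms n" and "nodes t = n" "Itr t \<subseteq> Inv \<sigma>"
  moreover have "\<forall>t. nodes t = n \<longrightarrow> Itr t \<subseteq> Inv \<sigma> \<longrightarrow> Itr t \<subseteq> Itr (rho \<sigma>)"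
    using rho_props[OF p] by (metis conjunct2)
  ultimately show ?thesis by blast
qed

lemma galois4:
  assumes "\<sigma> \<in> perms n" "nodes t = n"
  shows "weak_le (gam t) \<sigma> \<longleftrightarrow> tamari_le t (rho \<sigma>)"
proof -
  have "tamari_le t (rho \<sigma>) \<longleftrightarrow> Itr t \<subseteq> Itr (rho \<sigma>)"
    using tamari_iff[of t "rho \<sigma>"] rho_nodes[OF assms(1)] assms(2) by simp
  also have "\<dots> \<longleftrightarrow> Itr t \<subseteq> Inv \<sigma>" using rho_sub[OF assms(1)] rho_max[OF assms] by blast
  finally show ?thesis unfolding weak_iff Inv_gam by simp
qed

lemma galois3:
  assumes "\<sigma> \<in> perms n" "S \<in> Q n"
  shows "Des \<sigma> \<subseteq> S \<longleftrightarrow> weak_le \<sigma> (Z n S)"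
proof -
  have ln: "length \<sigma> = n" using assms(1) perms_length by blast
  show ?thesis unfolding weak_iff Z_props(2)[OF assms(2)]
  proof
    assume h: "Des \<sigma> \<subseteq> S"
    show "Inv \<sigma> \<subseteq> sep S n"
    proof
      fix z assume "z \<in> Inv \<sigma>"
      then obtain i j where z: "z = (i,j)" "(i,j) \<in> Inv \<sigma>" by (cases z) auto
      then obtain k where k: "i \<le> k" "k < j" "(k,k+1) \<in> Inv \<sigma>" using inv_has_des by blast
      then have "k \<in> Des \<sigma>" unfolding Des_mem by (auto simp: Inv_mem)
      then have "k \<in> S" using h by blast
      then show "z \<in> sep S n" using z k ln unfolding sep_def by (auto simp: Inv_mem)
    qed
  next
    assume h: "Inv \<sigma> \<subseteq> sep S n"
    show "Des \<sigma> \<subseteq> S"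
    proof
      fix i assume "i \<in> Des \<sigma>"
      then have "(i, i+1) \<in> sep S n" using h unfolding Des_mem by blast
      then obtain s where "s \<in> S" "i \<le> s" "s < i + 1" unfolding sep_def by blast
      moreover then have "s = i" by simp
      ultimately show "i \<in> S" by simp
    qed
  qed
qed

lemma galois6:
  assumes "\<sigma> \<in> perms n" "S \<in> Q n"
  shows "weak_le (Z n S) \<sigma> \<longleftrightarrow> S \<subseteq> GDes \<sigma>"
proof -
  show ?thesis unfolding weak_iff Z_props(2)[OF assms(2)]
  proof
    assume h: "sep S n \<subseteq> Inv \<sigma>"
    show "S \<subseteq> GDes \<sigma>"
    proof
      fix s assume s: "s \<in> S"
      then have s1: "1 \<le> s" "s < n" using assms(2) unfolding Q_iff by force+
      have "gd \<sigma> n s" unfolding gd_def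
      proof (intro allI impI)
        fix i j assume "1 \<le> i" "i \<le> s" "s < j" "j \<le> n"
        then have "(i,j) \<in> sep S n" using s unfolding sep_def by auto
        then show "(i,j) \<in> Inv \<sigma>" using h by blast
      qed
      then show "s \<in> GDes \<sigma>" using GDes_iff[OF assms(1)] s1 by blast
    qed
  next
    assume h: "S \<subseteq> GDes \<sigma>"
    show "sep S n \<subseteq> Inv \<sigma>"
    proof
      fix z assume "z \<in> sep S n"
      then obtain i j s where z: "z = (i,j)" "1 \<le> i" "i < j" "j \<le> n" "s \<in> S" "i \<le> s" "s < j"
        unfolding sep_def by blast
      then have "gd \<sigma> n s" using h GDes_iff[OF assms(1)] by blast
      then show "z \<in> Inv \<sigma>" using z unfolding gd_def by blast
    qed
  qed
qed

lemma galois2: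
  assumes "nodes t = n" "S \<in> Q n"
  shows "L t \<subseteq> S \<longleftrightarrow> tamari_le t (C n S)"
proof -
  have "tamari_le t (C n S) \<longleftrightarrow> Itr t \<subseteq> Itr (C n S)"
    using tamari_iff[of t "C n S"] C_props(1)[OF assms(2)] assms(1) by simp
  also have "\<dots> \<longleftrightarrow> weak_le (gam t) (Z n S)"
    unfolding weak_iff Inv_gam Z_props(2)[OF assms(2)] C_props(2)[OF assms(2)] by (rule refl)
  also have "\<dots> \<longleftrightarrow> Des (gam t) \<subseteq> S"
    using galois3[of "gam t" n S] gam_perm[of t] assms by simp
  finally show ?thesis unfolding L_Des by simp
qed

lemma galois5:
  assumes "nodes t = n" "S \<in> Q n"
  shows "tamari_le (C n S) t \<longleftrightarrow> S \<subseteq> R t"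
proof -
  have "tamari_le (C n S) t \<longleftrightarrow> Itr (C n S) \<subseteq> Itr t"
    using tamari_iff[of "C n S" t] C_props(1)[OF assms(2)] assms(1) by simp
  also have "\<dots> \<longleftrightarrow> weak_le (Z n S) (gam t)"
    unfolding weak_iff Inv_gam Z_props(2)[OF assms(2)] C_props(2)[OF assms(2)] by (rule refl)
  also have "\<dots> \<longleftrightarrow> S \<subseteq> GDes (gam t)"
    using galois6[of "gam t" n S] gam_perm[of t] assms by simp
  finally show ?thesis unfolding R_GDes by simp
qed

lemma Des_Itr: "Des (gam t) = {i. 1 \<le> i \<and> i < nodes t \<and> (i, i+1) \<in> Itr t}"
  unfolding set_eq_iff Des_mem length_gam Inv_gam by blast

lemma GDes_gam: "GDes (gam t) = {p. 1 \<le> p \<and> p < nodes t \<and> gd (gam t) (nodes t) p}"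
  using GDes_iff[OF gam_perm] by blast

lemma gd_mono: "Inv \<sigma> \<subseteq> Inv \<tau> \<Longrightarrow> gd \<sigma> n p \<Longrightarrow> gd \<tau> n p"
  unfolding gd_def by blast

lemma GDes_mono: "\<sigma> \<in> perms n \<Longrightarrow> \<tau> \<in> perms n \<Longrightarrow> Inv \<sigma> \<subseteq> Inv \<tau> \<Longrightarrow> GDes \<sigma> \<subseteq> GDes \<tau>"
  using GDes_iff gd_mono by blast

lemma Des_mono: "length \<sigma> = length \<tau> \<Longrightarrow> Inv \<sigma> \<subseteq> Inv \<tau> \<Longrightarrow> Des \<sigma> \<subseteq> Des \<tau>"
proof
  fix x assume "length \<sigma> = length \<tau>" "Inv \<sigma> \<subseteq> Inv \<tau>" "x \<in> Des \<sigma>"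
  then show "x \<in> Des \<tau>" unfolding Des_mem by auto
qed

lemma L_lam: "\<sigma> \<in> perms n \<Longrightarrow> L (lam \<sigma>) = Des \<sigma>"
proof -
  assume p: "\<sigma> \<in> perms n"
  have ln: "length \<sigma> = n" using p perms_length by blast
  have "(i, i+1) \<in> lc (Inv \<sigma>) \<longleftrightarrow> (i, i+1) \<in> Inv \<sigma>" for i
  proof
    assume "(i, i+1) \<in> lc (Inv \<sigma>)"
    then obtain k where "1 \<le> i" "i \<le> k" "(k, i+1) \<in> Inv \<sigma>" unfolding lc_mem by blast
    moreover then have "k = i" by (auto simp: Inv_mem)
    ultimately show "(i, i+1) \<in> Inv \<sigma>" by simp
  qed (use Inv_sub_lc in blast)
  then show ?thesis unfolding L_Itr lam_Itr[OF p] lam_nodes[OF p] set_eq_iff Des_mem ln by blast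
qed

lemma R_rho: "\<sigma> \<in> perms n \<Longrightarrow> R (rho \<sigma>) = GDes \<sigma>"
proof -
  assume p: "\<sigma> \<in> perms n"
  have nr: "nodes (rho \<sigma>) = n" using rho_nodes[OF p] .
  have "gd (gam (rho \<sigma>)) n q \<longleftrightarrow> gd \<sigma> n q" if q: "1 \<le> q" "q < n" for q
  proof
    assume "gd (gam (rho \<sigma>)) n q"
    then show "gd \<sigma> n q" using rho_sub[OF p] gd_mono[of "gam (rho \<sigma>)" \<sigma>] by (simp add: Inv_gam)
  next
    assume g: "gd \<sigma> n q"
    have Qq: "{q} \<in> Q n" using q unfolding Q_iff by auto
    have "Itr (C n {q}) \<subseteq> Inv \<sigma>"
    proof
      fix z assume "z \<in> Itr (C n {q})"
      then show "z \<in> Inv \<sigma>" using g unfolding C_props(2)[OF Qq] sep_def gd_def by auto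
    qed
    then have sub: "Itr (C n {q}) \<subseteq> Itr (rho \<sigma>)" using rho_max[OF p C_props(1)[OF Qq]] by blast
    show "gd (gam (rho \<sigma>)) n q" unfolding gd_def Inv_gam
    proof (intro allI impI)
      fix i j assume "1 \<le> i" "i \<le> q" "q < j" "j \<le> n"
      then have "(i,j) \<in> Itr (C n {q})" unfolding C_props(2)[OF Qq] sep_def by auto
      then show "(i,j) \<in> Itr (rho \<sigma>)" using sub by blast
    qed
  qed
  then show ?thesis unfolding R_GDes GDes_gam nr using GDes_iff[OF p] by blast
qed

theorem theorem2p1:
  fixes n :: nat
  shows
  \<comment> \<open>the maps have the stated domains and codomains\<close>
  "(\<forall>t\<in>Y n. L t \<in> Q n \<and> R t \<in> Q n \<and> gam t \<in> perms n) \<and>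
   (\<forall>S\<in>Q n. C n S \<in> Y n \<and> Z n S \<in> perms n) \<and>
   (\<forall>\<sigma>\<in>perms n. lam \<sigma> \<in> Y n \<and> rho \<sigma> \<in> Y n \<and> Des \<sigma> \<in> Q n \<and> GDes \<sigma> \<in> Q n) \<and>
   \<comment> \<open>order preservation\<close>
   (\<forall>s\<in>Y n. \<forall>t\<in>Y n. tamari_le s t \<longrightarrow>
        L s \<subseteq> L t \<and> R s \<subseteq> R t \<and> weak_le (gam s) (gam t)) \<and>
   (\<forall>S\<in>Q n. \<forall>T\<in>Q n. S \<subseteq> T \<longrightarrow> tamari_le (C n S) (C n T) \<and> weak_le (Z n S) (Z n T)) \<and>
   (\<forall>\<sigma>\<in>perms n. \<forall>\<tau>\<in>perms n. weak_le \<sigma> \<tau> \<longrightarrow>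
        tamari_le (lam \<sigma>) (lam \<tau>) \<and> tamari_le (rho \<sigma>) (rho \<tau>) \<and>
        Des \<sigma> \<subseteq> Des \<tau> \<and> GDes \<sigma> \<subseteq> GDes \<tau>) \<and>
   \<comment> \<open>compositions\<close>
   (\<forall>\<sigma>\<in>perms n. L (lam \<sigma>) = Des \<sigma> \<and> R (rho \<sigma>) = GDes \<sigma>) \<and>
   (\<forall>S\<in>Q n. gam (C n S) = Z n S) \<and>
   \<comment> \<open>Galois connections\<close>
   (\<forall>\<sigma>\<in>perms n. \<forall>t\<in>Y n. tamari_le (lam \<sigma>) t \<longleftrightarrow> weak_le \<sigma> (gam t)) \<and>
   (\<forall>t\<in>Y n. \<forall>S\<in>Q n. L t \<subseteq> S \<longleftrightarrow> tamari_le t (C n S)) \<and>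
   (\<forall>\<sigma>\<in>perms n. \<forall>S\<in>Q n. Des \<sigma> \<subseteq> S \<longleftrightarrow> weak_le \<sigma> (Z n S)) \<and>
   (\<forall>t\<in>Y n. \<forall>\<sigma>\<in>perms n. weak_le (gam t) \<sigma> \<longleftrightarrow> tamari_le t (rho \<sigma>)) \<and>
   (\<forall>S\<in>Q n. \<forall>t\<in>Y n. tamari_le (C n S) t \<longleftrightarrow> S \<subseteq> R t) \<and>
   (\<forall>S\<in>Q n. \<forall>\<sigma>\<in>perms n. weak_le (Z n S) \<sigma> \<longleftrightarrow> S \<subseteq> GDes \<sigma>)"
proof -
  have A1: "\<forall>t\<in>Y n. L t \<in> Q n \<and> R t \<in> Q n \<and> gam t \<in> perms n"
  proof
    fix t assume "t \<in> Y n"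
    then have nt: "nodes t = n" by (simp add: Y_iff)
    have "L t \<subseteq> {1..n-1}" unfolding L_def nt by auto
    moreover have "R t \<subseteq> {1..n-1}" unfolding R_def nt by auto
    moreover have "gam t \<in> perms n" using gam_perm[of t] nt by simp
    ultimately show "L t \<in> Q n \<and> R t \<in> Q n \<and> gam t \<in> perms n" unfolding Q_iff by blast
  qed
  have A2: "\<forall>S\<in>Q n. C n S \<in> Y n \<and> Z n S \<in> perms n"
    using C_props(1) Z_props(1) unfolding Y_iff by blast
  have A3: "\<forall>\<sigma>\<in>perms n. lam \<sigma> \<in> Y n \<and> rho \<sigma> \<in> Y n \<and> Des \<sigma> \<in> Q n \<and> GDes \<sigma> \<in> Q n"
  proof
    fix \<sigma> assume p: "\<sigma> \<in> perms n"
    have ln: "length \<sigma> = n" using p perms_length by blast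
    have "Des \<sigma> \<subseteq> {1..n-1}" unfolding Des_def ln by auto
    moreover have "GDes \<sigma> \<subseteq> {1..n-1}"
    proof
      fix x assume "x \<in> GDes \<sigma>"
      then have "x \<in> {1..<n}" using GDes_sub[of \<sigma>] ln by blast
      then show "x \<in> {1..n-1}" by auto
    qed
    ultimately show "lam \<sigma> \<in> Y n \<and> rho \<sigma> \<in> Y n \<and> Des \<sigma> \<in> Q n \<and> GDes \<sigma> \<in> Q n"
      unfolding Y_iff Q_iff using lam_nodes[OF p] rho_nodes[OF p] by blast
  qed
  have A4: "\<forall>s\<in>Y n. \<forall>t\<in>Y n. tamari_le s t \<longrightarrow> L s \<subseteq> L t \<and> R s \<subseteq> R t \<and> weak_le (gam s) (gam t)"
  proof (intro ballI impI)
    fix s t assume s: "s \<in> Y n" and t: "t \<in> Y n" and le: "tamari_le s t"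
    have sub: "Itr s \<subseteq> Itr t" using tamari_Itr[OF le] .
    have ns: "nodes s = n" "nodes t = n" using s t Y_iff by auto
    have "L s \<subseteq> L t" unfolding L_Itr ns using sub by blast
    moreover have "R s \<subseteq> R t" unfolding R_GDes
    proof -
      have "gam s \<in> perms n" "gam t \<in> perms n" using gam_perm[of s] gam_perm[of t] ns by simp_all
      moreover have "Inv (gam s) \<subseteq> Inv (gam t)" using sub by (simp add: Inv_gam)
      ultimately show "GDes (gam s) \<subseteq> GDes (gam t)" by (rule GDes_mono)
    qed
    moreover have "weak_le (gam s) (gam t)" unfolding weak_iff Inv_gam by (rule sub)
    ultimately show "L s \<subseteq> L t \<and> R s \<subseteq> R t \<and> weak_le (gam s) (gam t)" by blast
  qed
  have A5: "\<forall>S\<in>Q n. \<forall>T\<in>Q n. S \<subseteq> T \<longrightarrow> tamari_le (C n S) (C n T) \<and> weak_le (Z n S) (Z n T)"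
  proof (intro ballI impI)
    fix S T assume S: "S \<in> Q n" and T: "T \<in> Q n" and st: "S \<subseteq> T"
    have "sep S n \<subseteq> sep T n" using st unfolding sep_def by blast
    then show "tamari_le (C n S) (C n T) \<and> weak_le (Z n S) (Z n T)"
      unfolding weak_iff Z_props(2)[OF S] Z_props(2)[OF T]
      using TC[of "C n S" "C n T"] C_props[OF S] C_props[OF T] by simp
  qed
  have A6: "\<forall>\<sigma>\<in>perms n. \<forall>\<tau>\<in>perms n. weak_le \<sigma> \<tau> \<longrightarrow>
        tamari_le (lam \<sigma>) (lam \<tau>) \<and> tamari_le (rho \<sigma>) (rho \<tau>) \<and> Des \<sigma> \<subseteq> Des \<tau> \<and> GDes \<sigma> \<subseteq> GDes \<tau>"
  proof (intro ballI impI)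
    fix \<sigma> \<tau> assume p: "\<sigma> \<in> perms n" and q: "\<tau> \<in> perms n" and w: "weak_le \<sigma> \<tau>"
    have sub: "Inv \<sigma> \<subseteq> Inv \<tau>" using w weak_iff by blast
    have "tamari_le (lam \<sigma>) (lam \<tau>)"
      using TC[of "lam \<sigma>" "lam \<tau>"] lam_nodes[OF p] lam_nodes[OF q] lam_Itr[OF p] lam_Itr[OF q] lc_mono[OF sub] by simp
    moreover have "tamari_le (rho \<sigma>) (rho \<tau>)"
    proof -
      have "Itr (rho \<sigma>) \<subseteq> Inv \<tau>" using rho_sub[OF p] sub by blast
      then have "Itr (rho \<sigma>) \<subseteq> Itr (rho \<tau>)" using rho_max[OF q rho_nodes[OF p]] by blast
      then show ?thesis using TC[of "rho \<sigma>" "rho \<tau>"] rho_nodes[OF p] rho_nodes[OF q] by simp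
    qed
    moreover have "Des \<sigma> \<subseteq> Des \<tau>" using Des_mono[OF _ sub] perms_length[OF p] perms_length[OF q] by simp
    moreover have "GDes \<sigma> \<subseteq> GDes \<tau>" using GDes_mono[OF p q sub] .
    ultimately show "tamari_le (lam \<sigma>) (lam \<tau>) \<and> tamari_le (rho \<sigma>) (rho \<tau>) \<and> Des \<sigma> \<subseteq> Des \<tau> \<and> GDes \<sigma> \<subseteq> GDes \<tau>"
      by blast
  qed
  have A7: "\<forall>\<sigma>\<in>perms n. L (lam \<sigma>) = Des \<sigma> \<and> R (rho \<sigma>) = GDes \<sigma>"
    using L_lam R_rho by blast
  have A8: "\<forall>S\<in>Q n. gam (C n S) = Z n S" using gam_C by blast
  have A9: "\<forall>\<sigma>\<in>perms n. \<forall>t\<in>Y n. tamari_le (lam \<sigma>) t \<longleftrightarrow> weak_le \<sigma> (gam t)"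
    by (intro ballI, rule galois1, auto simp: Y_iff)
  have A10: "\<forall>t\<in>Y n. \<forall>S\<in>Q n. L t \<subseteq> S \<longleftrightarrow> tamari_le t (C n S)"
    by (intro ballI, rule galois2, auto simp: Y_iff)
  have A11: "\<forall>\<sigma>\<in>perms n. \<forall>S\<in>Q n. Des \<sigma> \<subseteq> S \<longleftrightarrow> weak_le \<sigma> (Z n S)"
    by (intro ballI, rule galois3, auto)
  have A12: "\<forall>t\<in>Y n. \<forall>\<sigma>\<in>perms n. weak_le (gam t) \<sigma> \<longleftrightarrow> tamari_le t (rho \<sigma>)"
    by (intro ballI, rule galois4, auto simp: Y_iff)
  have A13: "\<forall>S\<in>Q n. \<forall>t\<in>Y n. tamari_le (C n S) t \<longleftrightarrow> S \<subseteq> R t"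
    by (intro ballI, rule galois5, auto simp: Y_iff)
  have A14: "\<forall>S\<in>Q n. \<forall>\<sigma>\<in>perms n. weak_le (Z n S) \<sigma> \<longleftrightarrow> S \<subseteq> GDes \<sigma>"
    by (intro ballI, rule galois6, auto)
  show ?thesis using A1 A2 A3 A4 A5 A6 A7 A8 A9 A10 A11 A12 A13 A14 by blast
qed


end
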